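(* Let $(A,\succ,\prec)$ be a Leibniz-dendriform algebra with associated Leibniz algebra $(A,\circ)$ and let $r\in A\otimes A$ be such that $r+\tau(r)$ is invariant. The following are equivalent: (a) $r$ satisfies $S(r)=0$; (b) $(A^*,\circ_r)$ is a Leibniz algebra and both $T_r$ and $-T_{\tau(r)}$ are Leibniz algebra homomorphisms from $(A^*,\circ_r)$ to $(A,\circ)$; (c) $(A^*,\succ_r,\prec_r)$ is a Leibniz-dendriform algebra and both $T_r$ and $-T_{\tau(r)}$ are Leibniz-dendriform algebra homomorphisms from $(A^*,\succ_r,\prec_r)$ to $(A,\succ,\prec)$.
   Context: $\langle\cdot,\cdot\rangle$ is the natural pairing, $I$ the identity, $\tau(a\otimes b)=b\otimes a$. A Leibniz algebra is a vector space with bilinear $\circ$ such that $x\circ(y\circ z)=(x\circ y)\circ z+y\circ(x\circ z)$. A Leibniz-dendriform algebra is a vector space $A$ with bilinear operations $\succ,\prec$ such that, with $x\circ y:=x\succ y+x\prec y$, for all $x,y,z$: $(x\circ y)\succ z=x\succ(y\succ z)-y\succ(x\succ z)$, $y\prec(x\circ z)+(x\succ y)\prec z=x\succ(y\prec z)$, $x\prec(y\circ z)=(x\prec y)\prec z+y\succ(x\prec z)$. Write $x\odot y:=x\succ y+y\prec x$, $x\star y:=x\circ y+y\circ x$; $L_*(x)y=x*y$, $R_*(x)y=y*x$; $L_\odot:=L_\succ+R_\prec$, $R_\odot:=R_\succ+L_\prec$, $L_\star:=L_\circ+R_\circ$; for $f:A\to\mathrm{End}(A)$, $f^*:A\to\mathrm{End}(A^*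 )$ is $\langle f^*(x)\xi,v\rangle=-\langle\xi,f(x)v\rangle$. For $r=\sum_ia_i\otimes b_i$, $T_r:A^*\to A$ is $\langle T_r(\zeta),\eta\rangle=\langle r,\zeta\otimes\eta\rangle$, and $S(r):=\sum_{i,j}\big(a_i\otimes a_j\otimes (b_j\circ b_i)-a_i\otimes (b_i\odot a_j)\otimes b_j-(a_i\succ a_j)\otimes b_i\otimes b_j\big)$. An element $s\in A\otimes A$ is invariant if for all $x$: $(L_\odot(x)\otimes I-I\otimes R_\circ(x))s=0$ and $(L_\star(x)\otimes I-I\otimes R_\prec(x))\tau(s)=0$. The operations on $A^*$ (the duals of $\Delta_{\succ,r}(x)=(L_\odot(x)\otimes I-I\otimes R_\circ(x))r$ and $\Delta_{\prec,r}(x)=(L_\star(x)\otimes I-I\otimes R_\prec(x))\tau(r)$) are $\zeta\succ_r\eta=L_\circ^*(T_r(\zeta))\eta-R_\odot^*(T_{\tau(r)}(\eta))\zeta$, $\zeta\prec_r\eta=L_\prec^*(T_{\tau(r)}(\zeta))\eta-L_\star^*(T_r(\eta))\zeta$, and $\zeta\circ_r\eta=\zeta\succ_r\eta+\zeta\prec_r\eta$. *)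

theory Defs
  imports Main
begin

text \<open>Finite-dimensional vector space A over a field 'a, in coordinates with respect to a
basis indexed by the finite type 'i: vectors of A are functions 'i => 'a.
Elements of A* are written in the dual basis (also 'i => 'a), elements of A (x) A
as coefficient matrices 'i => 'i => 'a, elements of A (x) A (x) A as 'i => 'i => 'i => 'a.\<close>

type_synonym ('i,'a) vect = "'i \<Rightarrow> 'a"
type_synonym ('i,'a) op2 = "('i,'a) vect \<Rightarrow> ('i,'a) vect \<Rightarrow> ('i,'a) vect"

definition unitv :: "'i \<Rightarrow> ('i,'a::field) vect" where
  "unitv k = (\<lambda>i. if i = k then 1 else 0)"

definition bil :: "('i \<Rightarrow> 'i \<Rightarrow> 'i \<Rightarrow> 'a::field) \<Rightarrow> ('i::finite,'a) op2" where
  "bil c x y = (\<lambda>k. \<Sum>i\<in>UNIV. \<Sum>j\<in>UNIV. x i * y j * c i j k)"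

definition pairing :: "('i::finite,'a::field) vect \<Rightarrow> ('i,'a) vect \<Rightarrow> 'a" where
  "pairing \<xi> v = (\<Sum>i\<in>UNIV. \<xi> i * v i)"

definition opsum :: "('i,'a::field) op2 \<Rightarrow> ('i,'a) op2 \<Rightarrow> ('i,'a) op2" where
  "opsum f g x y = (\<lambda>k. f x y k + g x y k)"

definition leibniz :: "('i,'a::field) op2 \<Rightarrow> bool" where
  "leibniz m \<longleftrightarrow> (\<forall>x y z. m x (m y z) = (\<lambda>k. m (m x y) z k + m y (m x z) k))"

definition leib_dend :: "('i,'a::field) op2 \<Rightarrow> ('i,'a) op2 \<Rightarrow> bool" where
  "leib_dend sc pc \<longleftrightarrow>
     (\<forall>x y z. sc (opsum sc pc x y) z = (\<lambda>k. sc x (sc y z) k - sc y (sc x z) k)) \<and>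
     (\<forall>x y z. (\<lambda>k. pc y (opsum sc pc x z) k + pc (sc x y) z k) = sc x (pc y z)) \<and>
     (\<forall>x y z. pc x (opsum sc pc y z) = (\<lambda>k. pc (pc x y) z k + sc y (pc x z) k))"

text \<open>Dual representation: for F = f(x) in End(A), the map f^*(x) on A*:
  <f^*(x) xi, v> = - <xi, f(x) v>.\<close>
definition dualop :: "(('i::finite,'a::field) vect \<Rightarrow> ('i,'a) vect) \<Rightarrow> ('i,'a) vect \<Rightarrow> ('i,'a) vect" where
  "dualop F \<xi> = (\<lambda>k. - pairing \<xi> (F (unitv k)))"

definition tau :: "('i \<Rightarrow> 'i \<Rightarrow> 'a) \<Rightarrow> ('i \<Rightarrow> 'i \<Rightarrow> 'a)" where
  "tau r = (\<lambda>p q. r q p)"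

text \<open>T_r : A* -> A,  <T_r zeta, eta> = <r, zeta (x) eta>.\<close>
definition Tr :: "('i::finite \<Rightarrow> 'i \<Rightarrow> 'a::field) \<Rightarrow> ('i,'a) vect \<Rightarrow> ('i,'a) vect" where
  "Tr r \<zeta> = (\<lambda>q. \<Sum>p\<in>UNIV. \<zeta> p * r p q)"

text \<open>(F (x) I) s and (I (x) G) s for s in A (x) A.\<close>
definition tl_map :: "(('i::finite,'a::field) vect \<Rightarrow> ('i,'a) vect) \<Rightarrow> ('i \<Rightarrow> 'i \<Rightarrow> 'a) \<Rightarrow> ('i \<Rightarrow> 'i \<Rightarrow> 'a)" where
  "tl_map F s = (\<lambda>\<alpha> \<beta>. \<Sum>p\<in>UNIV. s p \<beta> * F (unitv p) \<alpha>)"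

definition tr_map :: "(('i::finite,'a::field) vect \<Rightarrow> ('i,'a) vect) \<Rightarrow> ('i \<Rightarrow> 'i \<Rightarrow> 'a) \<Rightarrow> ('i \<Rightarrow> 'i \<Rightarrow> 'a)" where
  "tr_map G s = (\<lambda>\<alpha> \<beta>. \<Sum>q\<in>UNIV. s \<alpha> q * G (unitv q) \<beta>)"

definition L_odot :: "('i,'a::field) op2 \<Rightarrow> ('i,'a) op2 \<Rightarrow> ('i,'a) op2" where
  "L_odot sc pc x y = (\<lambda>k. sc x y k + pc y x k)"

definition R_odot :: "('i,'a::field) op2 \<Rightarrow> ('i,'a) op2 \<Rightarrow> ('i,'a) op2" where
  "R_odot sc pc x y = (\<lambda>k. sc y x k + pc x y k)"

definition L_star :: "('i,'a::field) op2 \<Rightarrow> ('i,'a) op2 \<Rightarrow> ('i,'a) op2" where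
  "L_star sc pc x y = (\<lambda>k. opsum sc pc x y k + opsum sc pc y x k)"

definition Rmul :: "('i,'a) op2 \<Rightarrow> ('i,'a) op2" where
  "Rmul m x y = m y x"

definition invariant :: "('i::finite,'a::field) op2 \<Rightarrow> ('i,'a) op2 \<Rightarrow> ('i \<Rightarrow> 'i \<Rightarrow> 'a) \<Rightarrow> bool" where
  "invariant sc pc s \<longleftrightarrow>
     (\<forall>x. tl_map (L_odot sc pc x) s = tr_map (Rmul (opsum sc pc) x) s) \<and>
     (\<forall>x. tl_map (L_star sc pc x) (tau s) = tr_map (Rmul pc x) (tau s))"

definition succ_r :: "('i::finite,'a::field) op2 \<Rightarrow> ('i,'a) op2 \<Rightarrow> ('i \<Rightarrow> 'i \<Rightarrow> 'a) \<Rightarrow> ('i,'a) op2" where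
  "succ_r sc pc r \<zeta> \<eta> =
     (\<lambda>k. dualop (opsum sc pc (Tr r \<zeta>)) \<eta> k - dualop (R_odot sc pc (Tr (tau r) \<eta>)) \<zeta> k)"

definition prec_r :: "('i::finite,'a::field) op2 \<Rightarrow> ('i,'a) op2 \<Rightarrow> ('i \<Rightarrow> 'i \<Rightarrow> 'a) \<Rightarrow> ('i,'a) op2" where
  "prec_r sc pc r \<zeta> \<eta> =
     (\<lambda>k. dualop (pc (Tr (tau r) \<zeta>)) \<eta> k - dualop (L_star sc pc (Tr r \<eta>)) \<zeta> k)"

text \<open>S(r) in A (x) A (x) A, in coordinates: with r = sum r p q e_p (x) e_q,
  S(r) = sum r_pq r_st ( e_p (x) e_s (x) (e_t o e_q) - e_p (x) (e_q odot e_s) (x) e_t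
                          - (e_p > e_s) (x) e_q (x) e_t ),  where x odot y = x > y + y < x.\<close>
definition S_tensor :: "('i::finite,'a::field) op2 \<Rightarrow> ('i,'a) op2 \<Rightarrow> ('i \<Rightarrow> 'i \<Rightarrow> 'a) \<Rightarrow> ('i \<Rightarrow> 'i \<Rightarrow> 'i \<Rightarrow> 'a)" where
  "S_tensor sc pc r = (\<lambda>\<alpha> \<beta> \<gamma>.
      (\<Sum>q\<in>UNIV. \<Sum>t\<in>UNIV. r \<alpha> q * r \<beta> t * opsum sc pc (unitv t) (unitv q) \<gamma>)
    - (\<Sum>q\<in>UNIV. \<Sum>s\<in>UNIV. r \<alpha> q * r s \<gamma> * L_odot sc pc (unitv q) (unitv s) \<beta>)
    - (\<Sum>p\<in>UNIV. \<Sum>s\<in>UNIV. r p \<beta> * r s \<gamma> * sc (unitv p) (unitv s) \<alpha>))"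

end

theory Submission
  imports Defs "HOL-Library.Function_Algebras"
begin


lemma sum_fun_apply: "(\<Sum>a\<in>A. f a) x = (\<Sum>a\<in>A. f a x)"
  by (induction A rule: infinite_finite_induct) auto

definition smul :: "'a::field \<Rightarrow> ('i \<Rightarrow> 'a) \<Rightarrow> ('i \<Rightarrow> 'a)" where
  "smul c x = (\<lambda>k. c * x k)"

lemma bil_apply: "bil c x y k = (\<Sum>i\<in>UNIV. \<Sum>j\<in>UNIV. x i * y j * c i j k)"
  by (simp add: bil_def)

lemma bil_add_L: "bil c (x + y) z = bil c x z + bil c y z"
  by (rule ext) (simp add: bil_def algebra_simps sum.distrib)
lemma bil_add_R: "bil c z (x + y) = bil c z x + bil c z y"
  by (rule ext) (simp add: bil_def algebra_simps sum.distrib)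
lemma bil_uminus_L: "bil c (- x) z = - bil c x z"
  by (rule ext) (simp add: bil_def sum_negf)
lemma bil_uminus_R: "bil c z (- x) = - bil c z x"
  by (rule ext) (simp add: bil_def sum_negf)
lemma bil_diff_L: "bil c (x - y) z = bil c x z - bil c y z"
  by (rule ext) (simp add: bil_def algebra_simps sum_subtractf)
lemma bil_diff_R: "bil c z (x - y) = bil c z x - bil c z y"
  by (rule ext) (simp add: bil_def algebra_simps sum_subtractf)
lemma bil_smul_L: "bil c (smul a x) z = smul a (bil c x z)"
  by (rule ext) (simp add: bil_def smul_def sum_distrib_left algebra_simps)
lemma bil_smul_R: "bil c z (smul a x) = smul a (bil c z x)"
  by (rule ext) (simp add: bil_def smul_def sum_distrib_left algebra_simps)

lemma pairing_add_L: "pairing (x + y) z = pairing x z + pairing y z"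
  by (simp add: pairing_def algebra_simps sum.distrib)
lemma pairing_add_R: "pairing z (x + y) = pairing z x + pairing z y"
  by (simp add: pairing_def algebra_simps sum.distrib)
lemma pairing_uminus_L: "pairing (- x) z = - pairing x z"
  by (simp add: pairing_def sum_negf)
lemma pairing_uminus_R: "pairing z (- x) = - pairing z x"
  by (simp add: pairing_def sum_negf)
lemma pairing_diff_L: "pairing (x - y) z = pairing x z - pairing y z"
  by (simp add: pairing_def algebra_simps sum_subtractf)
lemma pairing_diff_R: "pairing z (x - y) = pairing z x - pairing z y"
  by (simp add: pairing_def algebra_simps sum_subtractf)
lemma pairing_smul_L: "pairing (smul a x) z = a * pairing x z"
  by (simp add: pairing_def smul_def sum_distrib_left algebra_simps)
lemma pairing_smul_R: "pairing z (smul a x) = a * pairing z x"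
  by (simp add: pairing_def smul_def sum_distrib_left algebra_simps)

lemma Tr_add: "Tr r (x + y) = Tr r x + Tr r y"
  by (rule ext) (simp add: Tr_def algebra_simps sum.distrib)
lemma Tr_uminus: "Tr r (- x) = - Tr r x"
  by (rule ext) (simp add: Tr_def sum_negf)
lemma Tr_diff: "Tr r (x - y) = Tr r x - Tr r y"
  by (rule ext) (simp add: Tr_def algebra_simps sum_subtractf)
lemma Tr_smul: "Tr r (smul a x) = smul a (Tr r x)"
  by (rule ext) (simp add: Tr_def smul_def sum_distrib_left algebra_simps)

lemma unitv_mult_L: "unitv k i * a = (if i = k then a else 0)"
  by (simp add: unitv_def)
lemma unitv_mult_R: "a * unitv k i = (if i = k then a else 0)"
  by (simp add: unitv_def)
lemma pairing_unit_L: "pairing (unitv k) w = w k"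
  by (simp add: pairing_def unitv_mult_L)
lemma pairing_unit_R: "pairing w (unitv k) = w k"
  by (simp add: pairing_def unitv_mult_R)

lemma pairing_Tr: "pairing \<xi> (Tr r \<alpha>) = pairing \<alpha> (Tr (tau r) \<xi>)"
  unfolding pairing_def Tr_def tau_def
  by (simp add: sum_distrib_left sum_distrib_right algebra_simps) (rule sum.swap)

lemma Tr_sym: assumes "\<And>p q. s p q = s q p"
  shows "pairing \<alpha> (Tr s \<beta>) = pairing \<beta> (Tr s \<alpha>)"
proof -
  have "tau s = s" using assms by (auto simp: tau_def)
  then show ?thesis using pairing_Tr[of \<alpha> s \<beta>] by simp
qed

definition lin :: "(('i::finite \<Rightarrow> 'a::field) \<Rightarrow> ('i \<Rightarrow> 'a)) \<Rightarrow> bool" where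
  "lin F \<longleftrightarrow> (\<forall>w. F w = (\<lambda>j. \<Sum>k\<in>UNIV. w k * F (unitv k) j))"

lemma bil_unit_R: "bil c x (unitv k) j = (\<Sum>i\<in>UNIV. x i * c i k j)"
proof -
  have "(\<Sum>ja\<in>UNIV. x i * unitv k ja * c i ja j) = x i * c i k j" for i
  proof -
    have "(\<Sum>ja\<in>UNIV. x i * unitv k ja * c i ja j) = (\<Sum>ja\<in>UNIV. if ja = k then x i * c i ja j else 0)"
      by (rule sum.cong) (auto simp: unitv_def)
    then show ?thesis by simp
  qed
  then show ?thesis by (simp add: bil_def)
qed
lemma bil_unit_L: "bil c (unitv k) x j = (\<Sum>i\<in>UNIV. x i * c k i j)"
proof -
  have "(\<Sum>ja\<in>UNIV. unitv k i * x ja * c i ja j) = (if i = k then (\<Sum>ja\<in>UNIV. x ja * c k ja j) else 0)" for i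
    by (simp add: unitv_def)
  then show ?thesis by (simp add: bil_def)
qed

lemma lin_bil_R: "lin (bil c x)"
  unfolding lin_def
proof (intro allI ext)
  fix w :: "'a \<Rightarrow> 'b" and j
  have "(\<Sum>k\<in>UNIV. w k * bil c x (unitv k) j) = (\<Sum>k\<in>UNIV. \<Sum>i\<in>UNIV. x i * w k * c i k j)"
    by (simp add: bil_unit_R sum_distrib_left mult_ac)
  also have "\<dots> = (\<Sum>i\<in>UNIV. \<Sum>k\<in>UNIV. x i * w k * c i k j)" by (rule sum.swap)
  finally show "bil c x w j = (\<Sum>k\<in>UNIV. w k * bil c x (unitv k) j)" by (simp add: bil_apply)
qed

lemma lin_bil_L: "lin (\<lambda>w. bil c w x)"
  unfolding lin_def
proof (intro allI ext)
  fix w :: "'a \<Rightarrow> 'b" and j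
  have "(\<Sum>k\<in>UNIV. w k * bil c (unitv k) x j) = (\<Sum>k\<in>UNIV. \<Sum>i\<in>UNIV. w k * x i * c k i j)"
    by (simp add: bil_unit_L sum_distrib_left mult_ac)
  then show "bil c w x j = (\<Sum>k\<in>UNIV. w k * bil c (unitv k) x j)" by (simp add: bil_apply)
qed

lemma lin_add: assumes "lin F" "lin G" shows "lin (\<lambda>w. F w + G w)"
  unfolding lin_def
proof (intro allI ext)
  fix w j
  have f: "F w j = (\<Sum>k\<in>UNIV. w k * F (unitv k) j)" and g: "G w j = (\<Sum>k\<in>UNIV. w k * G (unitv k) j)"
    using assms unfolding lin_def fun_eq_iff by blast+
  show "(F w + G w) j = (\<Sum>k\<in>UNIV. w k * (F (unitv k) + G (unitv k)) j)"
    by (simp add: f g algebra_simps sum.distrib)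
qed

lemma pairing_dualop: assumes "lin F" shows "pairing (dualop F \<xi>) w = - pairing \<xi> (F w)"
proof -
  have "pairing \<xi> (F w) = (\<Sum>j\<in>UNIV. \<xi> j * (\<Sum>k\<in>UNIV. w k * F (unitv k) j))"
  proof -
    have "F w = (\<lambda>j. \<Sum>k\<in>UNIV. w k * F (unitv k) j)" using assms unfolding lin_def by blast
    then show ?thesis by (simp add: pairing_def)
  qed
  also have "\<dots> = (\<Sum>k\<in>UNIV. w k * (\<Sum>j\<in>UNIV. \<xi> j * F (unitv k) j))"
    by (simp add: sum_distrib_left algebra_simps) (rule sum.swap)
  finally show ?thesis
    by (simp add: pairing_def dualop_def sum_negf algebra_simps)
qed




lemma opsum_eq: "opsum f g x y = f x y + g x y" by (simp add: opsum_def plus_fun_def)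
lemma opsum_fun: "opsum f g x = (\<lambda>y. f x y + g x y)" by (rule ext) (simp add: opsum_eq)
lemma R_odot_fun: "R_odot f g x = (\<lambda>y. f y x + g x y)" by (rule ext) (simp add: R_odot_def plus_fun_def)
lemma L_odot_eq: "L_odot f g x y = f x y + g y x" by (simp add: L_odot_def plus_fun_def)
lemma L_star_eq: "L_star f g x y = f x y + g x y + (f y x + g y x)" by (simp add: L_star_def opsum_def plus_fun_def)
lemma L_star_fun: "L_star f g x = (\<lambda>y. f x y + g x y + (f y x + g y x))" by (rule ext) (simp add: L_star_eq)
lemma Rmul_eq: "Rmul m x y = m y x" by (simp add: Rmul_def)

lemma succ_r_eq: "succ_r sc pc r \<zeta> \<eta> = dualop (opsum sc pc (Tr r \<zeta>)) \<eta> - dualop (R_odot sc pc (Tr (tau r) \<eta>)) \<zeta>"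
  by (simp add: succ_r_def fun_diff_def)
lemma prec_r_eq: "prec_r sc pc r \<zeta> \<eta> = dualop (pc (Tr (tau r) \<zeta>)) \<eta> - dualop (L_star sc pc (Tr r \<eta>)) \<zeta>"
  by (simp add: prec_r_def fun_diff_def)

lemma succ_pair: "pairing (succ_r (bil cs) (bil cp) r \<zeta> \<eta>) w =
   - pairing \<eta> (bil cs (Tr r \<zeta>) w + bil cp (Tr r \<zeta>) w) + pairing \<zeta> (bil cs w (Tr (tau r) \<eta>) + bil cp (Tr (tau r) \<eta>) w)"
  unfolding succ_r_eq pairing_diff_L opsum_fun R_odot_fun
  by (simp add: pairing_dualop lin_add lin_bil_R lin_bil_L)

lemma prec_pair: "pairing (prec_r (bil cs) (bil cp) r \<zeta> \<eta>) w =
   - pairing \<eta> (bil cp (Tr (tau r) \<zeta>) w) + pairing \<zeta> (bil cs (Tr r \<eta>) w + bil cp (Tr r \<eta>) w + (bil cs w (Tr r \<eta>) + bil cp w (Tr r \<eta>)))"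
proof -
  have l: "lin (\<lambda>y. bil cs (Tr r \<eta>) y + bil cp (Tr r \<eta>) y + (bil cs y (Tr r \<eta>) + bil cp y (Tr r \<eta>)))"
    by (intro lin_add lin_bil_R lin_bil_L)
  show ?thesis
    unfolding prec_r_eq pairing_diff_L L_star_fun
    by (simp add: pairing_dualop[OF l] pairing_dualop[OF lin_bil_R])
qed

lemma Tr_unit: "Tr r (unitv a) = r a"
  by (rule ext) (simp add: Tr_def unitv_mult_L)
lemma bil_units: "bil c (unitv i) (unitv j) k = c i j k"
  by (simp add: bil_unit_L unitv_mult_L)

definition Sform where
  "Sform cs cp r \<zeta> \<eta> \<xi> = pairing \<xi> (bil cs (Tr r \<eta>) (Tr r \<zeta>) + bil cp (Tr r \<eta>) (Tr r \<zeta>))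
     - pairing \<eta> (bil cs (Tr r \<zeta>) (Tr (tau r) \<xi>) + bil cp (Tr (tau r) \<xi>) (Tr r \<zeta>))
     - pairing \<zeta> (bil cs (Tr (tau r) \<eta>) (Tr (tau r) \<xi>))"

lemma S_tensor_Sform: "S_tensor (bil cs) (bil cp) r \<alpha> \<beta> \<gamma> = Sform cs cp r (unitv \<alpha>) (unitv \<beta>) (unitv \<gamma>)"
proof -
  have tt: "Tr (tau r) (unitv a) = (\<lambda>p. r p a)" for a by (simp add: Tr_unit tau_def)
  have 1: "(\<Sum>q\<in>UNIV. \<Sum>t\<in>UNIV. r \<alpha> q * r \<beta> t * opsum (bil cs) (bil cp) (unitv t) (unitv q) \<gamma>)
      = pairing (unitv \<gamma>) (bil cs (Tr r (unitv \<beta>)) (Tr r (unitv \<alpha>)) + bil cp (Tr r (unitv \<beta>)) (Tr r (unitv \<alpha>)))"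
  proof -
    have "(\<Sum>q\<in>UNIV. \<Sum>t\<in>UNIV. r \<alpha> q * r \<beta> t * opsum (bil cs) (bil cp) (unitv t) (unitv q) \<gamma>)
        = (\<Sum>t\<in>UNIV. \<Sum>q\<in>UNIV. r \<alpha> q * r \<beta> t * opsum (bil cs) (bil cp) (unitv t) (unitv q) \<gamma>)"
      by (rule sum.swap)
    then show ?thesis
      unfolding opsum_eq plus_fun_apply bil_units
      by (simp add: pairing_unit_L Tr_unit bil_apply algebra_simps sum.distrib)
  qed
  have 2: "(\<Sum>q\<in>UNIV. \<Sum>s\<in>UNIV. r \<alpha> q * r s \<gamma> * L_odot (bil cs) (bil cp) (unitv q) (unitv s) \<beta>)
      = pairing (unitv \<beta>) (bil cs (Tr r (unitv \<alpha>)) (Tr (tau r) (unitv \<gamma>)) + bil cp (Tr (tau r) (unitv \<gamma>)) (Tr r (unitv \<alpha>)))"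
  proof -
    have "(\<Sum>q\<in>UNIV. \<Sum>s\<in>UNIV. r \<alpha> q * r s \<gamma> * bil cp (unitv s) (unitv q) \<beta>)
       = (\<Sum>s\<in>UNIV. \<Sum>q\<in>UNIV. r \<alpha> q * r s \<gamma> * bil cp (unitv s) (unitv q) \<beta>)"
      by (rule sum.swap)
    then show ?thesis
      unfolding L_odot_eq plus_fun_apply bil_units
      by (simp add: pairing_unit_L Tr_unit tau_def bil_apply algebra_simps sum.distrib)
  qed
  have 3: "(\<Sum>p\<in>UNIV. \<Sum>s\<in>UNIV. r p \<beta> * r s \<gamma> * bil cs (unitv p) (unitv s) \<alpha>)
      = pairing (unitv \<alpha>) (bil cs (Tr (tau r) (unitv \<beta>)) (Tr (tau r) (unitv \<gamma>)))"
    unfolding bil_units by (simp add: pairing_unit_L Tr_unit tau_def bil_apply algebra_simps)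
  show ?thesis unfolding S_tensor_def Sform_def by (simp only: 1 2 3)
qed


lemma lin_repr_sum:
  fixes f :: "('i \<Rightarrow> 'a::field) \<Rightarrow> 'a"
  assumes add: "\<And>x y. f (x + y) = f x + f y"
  shows "finite A \<Longrightarrow> f (\<Sum>a\<in>A. g a) = (\<Sum>a\<in>A. f (g a))"
proof (induction A rule: finite_induct)
  case empty
  have "f 0 = f (0 + 0)" by simp
  also have "\<dots> = f 0 + f 0" by (rule add)
  finally have f0: "f 0 = 0" by (metis add_cancel_right_right)
  show ?case using f0 by (simp add: zero_fun_def)
next
  case (insert a A)
  show ?case by (simp only: sum.insert[OF insert(1,2)] add insert(3))
qed

lemma lin_repr:
  fixes f :: "('i::finite \<Rightarrow> 'a::field) \<Rightarrow> 'a"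
  assumes add: "\<And>x y. f (x + y) = f x + f y" and hom: "\<And>c x. f (smul c x) = c * f x"
  shows "f \<zeta> = (\<Sum>\<alpha>\<in>UNIV. \<zeta> \<alpha> * f (unitv \<alpha>))"
proof -
  have "\<zeta> = (\<Sum>\<alpha>\<in>UNIV. smul (\<zeta> \<alpha>) (unitv \<alpha>))"
    by (rule ext) (simp add: sum_fun_apply smul_def unitv_mult_R)
  then have "f \<zeta> = f (\<Sum>\<alpha>\<in>UNIV. smul (\<zeta> \<alpha>) (unitv \<alpha>))" by simp
  also have "\<dots> = (\<Sum>\<alpha>\<in>UNIV. f (smul (\<zeta> \<alpha>) (unitv \<alpha>)))" by (rule lin_repr_sum[OF add]) simp
  finally show ?thesis by (simp add: hom)
qed

lemmas lin_simps = Tr_add bil_add_L bil_add_R pairing_add_L pairing_add_R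
  Tr_smul bil_smul_L bil_smul_R pairing_smul_L pairing_smul_R

lemma t1: "Sform cs cp r (x + y) \<eta> \<xi> = Sform cs cp r x \<eta> \<xi> + Sform cs cp r y \<eta> \<xi>"
  by (simp add: Sform_def lin_simps algebra_simps)
lemma t2: "Sform cs cp r (smul c x) \<eta> \<xi> = c * Sform cs cp r x \<eta> \<xi>"
  by (simp add: Sform_def lin_simps algebra_simps)
lemma t3: "Sform cs cp r \<zeta> (x + y) \<xi> = Sform cs cp r \<zeta> x \<xi> + Sform cs cp r \<zeta> y \<xi>"
  by (simp add: Sform_def lin_simps algebra_simps)
lemma t4: "Sform cs cp r \<zeta> (smul c x) \<xi> = c * Sform cs cp r \<zeta> x \<xi>"
  by (simp add: Sform_def lin_simps algebra_simps)
lemma t5: "Sform cs cp r \<zeta> \<eta> (x + y) = Sform cs cp r \<zeta> \<eta> x + Sform cs cp r \<zeta> \<eta> y"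
  by (simp add: Sform_def lin_simps algebra_simps)
lemma t6: "Sform cs cp r \<zeta> \<eta> (smul c x) = c * Sform cs cp r \<zeta> \<eta> x"
  by (simp add: Sform_def lin_simps algebra_simps)

lemma Sform_expand:
  "Sform cs cp r \<zeta> \<eta> \<xi> = (\<Sum>\<alpha>\<in>UNIV. \<zeta> \<alpha> * (\<Sum>\<beta>\<in>UNIV. \<eta> \<beta> * (\<Sum>\<gamma>\<in>UNIV. \<xi> \<gamma> *
      Sform cs cp r (unitv \<alpha>) (unitv \<beta>) (unitv \<gamma>))))"
proof -
  have 1: "Sform cs cp r z e x = (\<Sum>\<alpha>\<in>UNIV. z \<alpha> * Sform cs cp r (unitv \<alpha>) e x)" for z e x
    by (rule lin_repr[of "\<lambda>z. Sform cs cp r z e x", OF t1 t2])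
  have 2: "Sform cs cp r z e x = (\<Sum>\<beta>\<in>UNIV. e \<beta> * Sform cs cp r z (unitv \<beta>) x)" for z e x
    by (rule lin_repr[of "\<lambda>e. Sform cs cp r z e x", OF t3 t4])
  have 3: "Sform cs cp r z e x = (\<Sum>\<gamma>\<in>UNIV. x \<gamma> * Sform cs cp r z e (unitv \<gamma>))" for z e x
    by (rule lin_repr[of "\<lambda>x. Sform cs cp r z e x", OF t5 t6])
  have "Sform cs cp r \<zeta> \<eta> \<xi> = (\<Sum>\<alpha>\<in>UNIV. \<zeta> \<alpha> * Sform cs cp r (unitv \<alpha>) \<eta> \<xi>)" by (rule 1)
  also have "\<dots> = (\<Sum>\<alpha>\<in>UNIV. \<zeta> \<alpha> * (\<Sum>\<beta>\<in>UNIV. \<eta> \<beta> * Sform cs cp r (unitv \<alpha>) (unitv \<beta>) \<xi>))"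
    by (simp only: 2[of "unitv _" \<eta> \<xi>])
  also have "\<dots> = (\<Sum>\<alpha>\<in>UNIV. \<zeta> \<alpha> * (\<Sum>\<beta>\<in>UNIV. \<eta> \<beta> * (\<Sum>\<gamma>\<in>UNIV. \<xi> \<gamma> *
      Sform cs cp r (unitv \<alpha>) (unitv \<beta>) (unitv \<gamma>))))"
    by (simp only: 3[of "unitv _" "unitv _" \<xi>])
  finally show ?thesis .
qed

lemma S_zero_Sform:
  assumes "S_tensor (bil cs) (bil cp) r = (\<lambda>_ _ _. 0)"
  shows "Sform cs cp r \<zeta> \<eta> \<xi> = 0"
proof -
  have u: "Sform cs cp r (unitv a) (unitv b) (unitv c) = 0" for a b c
  proof -
    have "Sform cs cp r (unitv a) (unitv b) (unitv c) = S_tensor (bil cs) (bil cp) r a b c"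
      by (rule S_tensor_Sform[symmetric])
    also have "\<dots> = 0" using assms by simp
    finally show ?thesis .
  qed
  show ?thesis by (subst Sform_expand) (simp only: u mult_zero_right sum.neutral_const)
qed

lemma Sform_zero_S:
  assumes "\<And>\<zeta> \<eta> \<xi>. Sform cs cp r \<zeta> \<eta> \<xi> = 0"
  shows "S_tensor (bil cs) (bil cp) r = (\<lambda>_ _ _. 0)"
  by (intro ext) (simp only: S_tensor_Sform assms)

lemma vec_eq_pair: assumes "\<And>k. pairing (unitv k) a = pairing (unitv k) b" shows "a = b"
  using assms by (simp add: pairing_unit_L fun_eq_iff)
lemma covec_eq_pair: assumes "\<And>v. pairing a v = pairing b v" shows "a = b"
  using assms[of "unitv _"] by (simp add: pairing_unit_R fun_eq_iff)

lemma pairing_lin: assumes "lin F" shows "pairing g (F w) = (\<Sum>k\<in>UNIV. w k * pairing g (F (unitv k)))"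
proof -
  have "F w = (\<lambda>j. \<Sum>k\<in>UNIV. w k * F (unitv k) j)" using assms unfolding lin_def by blast
  then have "pairing g (F w) = (\<Sum>j\<in>UNIV. g j * (\<Sum>k\<in>UNIV. w k * F (unitv k) j))" by (simp add: pairing_def)
  also have "\<dots> = (\<Sum>k\<in>UNIV. w k * (\<Sum>j\<in>UNIV. g j * F (unitv k) j))"
    by (simp add: sum_distrib_left algebra_simps) (rule sum.swap)
  finally show ?thesis by (simp add: pairing_def)
qed

definition actL :: "('i::finite \<Rightarrow> 'i \<Rightarrow> 'i \<Rightarrow> 'a::field) \<Rightarrow> ('i \<Rightarrow> 'a) \<Rightarrow> ('i \<Rightarrow> 'a) \<Rightarrow> ('i \<Rightarrow> 'a)" where
  "actL c y g = (\<lambda>k. pairing g (bil c y (unitv k)))"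
definition actR :: "('i::finite \<Rightarrow> 'i \<Rightarrow> 'i \<Rightarrow> 'a::field) \<Rightarrow> ('i \<Rightarrow> 'a) \<Rightarrow> ('i \<Rightarrow> 'a) \<Rightarrow> ('i \<Rightarrow> 'a)" where
  "actR c y g = (\<lambda>k. pairing g (bil c (unitv k) y))"

lemma pairing_actL: "pairing (actL c y g) w = pairing g (bil c y w)"
proof -
  have "pairing (actL c y g) w = (\<Sum>k\<in>UNIV. w k * pairing g (bil c y (unitv k)))"
    unfolding actL_def pairing_def[of "\<lambda>k. pairing g (bil c y (unitv k))" w] by (simp add: mult.commute)
  also have "\<dots> = pairing g (bil c y w)" by (rule pairing_lin[OF lin_bil_R, symmetric])
  finally show ?thesis .
qed
lemma pairing_actR: "pairing (actR c y g) w = pairing g (bil c w y)"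
proof -
  have "pairing (actR c y g) w = (\<Sum>k\<in>UNIV. w k * pairing g (bil c (unitv k) y))"
    unfolding actR_def pairing_def[of "\<lambda>k. pairing g (bil c (unitv k) y)" w] by (simp add: mult.commute)
  also have "\<dots> = pairing g (bil c w y)" by (rule pairing_lin[OF lin_bil_L, symmetric])
  finally show ?thesis .
qed

definition pair2 :: "('i::finite \<Rightarrow> 'i \<Rightarrow> 'a::field) \<Rightarrow> ('i \<Rightarrow> 'a) \<Rightarrow> ('i \<Rightarrow> 'a) \<Rightarrow> 'a" where
  "pair2 M a b = (\<Sum>i\<in>UNIV. \<Sum>j\<in>UNIV. a i * b j * M i j)"

lemma pair2_tl: assumes "lin F" shows "pair2 (tl_map F s) a b = pairing a (F (Tr (tau s) b))"
proof -
  have "F (Tr (tau s) b) = (\<lambda>j. \<Sum>k\<in>UNIV. Tr (tau s) b k * F (unitv k) j)" using assms unfolding lin_def by blast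
  then have "pairing a (F (Tr (tau s) b)) = (\<Sum>i\<in>UNIV. a i * (\<Sum>k\<in>UNIV. (\<Sum>j\<in>UNIV. b j * s k j) * F (unitv k) i))"
    by (simp add: pairing_def Tr_def tau_def)
  also have "\<dots> = (\<Sum>i\<in>UNIV. \<Sum>k\<in>UNIV. \<Sum>j\<in>UNIV. a i * b j * s k j * F (unitv k) i)"
    by (simp add: sum_distrib_left sum_distrib_right mult_ac)
  also have "\<dots> = (\<Sum>i\<in>UNIV. \<Sum>j\<in>UNIV. \<Sum>k\<in>UNIV. a i * b j * s k j * F (unitv k) i)"
    by (rule sum.cong[OF refl]) (rule sum.swap)
  also have "\<dots> = pair2 (tl_map F s) a b"
    by (simp add: pair2_def tl_map_def sum_distrib_left mult_ac)
  finally show ?thesis by simp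
qed

lemma pair2_tr: assumes "lin G" shows "pair2 (tr_map G s) a b = pairing b (G (Tr s a))"
proof -
  have "G (Tr s a) = (\<lambda>j. \<Sum>k\<in>UNIV. Tr s a k * G (unitv k) j)" using assms unfolding lin_def by blast
  then have "pairing b (G (Tr s a)) = (\<Sum>j\<in>UNIV. b j * (\<Sum>k\<in>UNIV. (\<Sum>i\<in>UNIV. a i * s i k) * G (unitv k) j))"
    by (simp add: pairing_def Tr_def)
  also have "\<dots> = (\<Sum>j\<in>UNIV. \<Sum>k\<in>UNIV. \<Sum>i\<in>UNIV. a i * b j * s i k * G (unitv k) j)"
    by (simp add: sum_distrib_left sum_distrib_right mult_ac)
  also have "\<dots> = (\<Sum>j\<in>UNIV. \<Sum>i\<in>UNIV. \<Sum>k\<in>UNIV. a i * b j * s i k * G (unitv k) j)"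
    by (rule sum.cong[OF refl]) (rule sum.swap)
  also have "\<dots> = (\<Sum>i\<in>UNIV. \<Sum>j\<in>UNIV. \<Sum>k\<in>UNIV. a i * b j * s i k * G (unitv k) j)"
    by (rule sum.swap)
  also have "\<dots> = pair2 (tr_map G s) a b"
    by (simp add: pair2_def tr_map_def sum_distrib_left mult_ac)
  finally show ?thesis by simp
qed




datatype kd = Ls | Rs | Lp | Rp

lemma tau_tau: "tau (tau r) = r" by (simp add: tau_def)

locale LDc =
  fixes cs cp :: "'i::finite \<Rightarrow> 'i \<Rightarrow> 'i \<Rightarrow> 'a::field" and r :: "'i \<Rightarrow> 'i \<Rightarrow> 'a"
  assumes LD: "leib_dend (bil cs) (bil cp)"
    and inv: "invariant (bil cs) (bil cp) (\<lambda>p q. r p q + tau r p q)"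
begin

abbreviation "sc \<equiv> bil cs"
abbreviation "pc \<equiv> bil cp"

definition SS where "SS g = Tr r g + Tr (tau r) g"

lemma Tr_s: "Tr (\<lambda>p q. r p q + tau r p q) g = SS g"
  by (rule ext) (simp add: Tr_def SS_def algebra_simps sum.distrib)

lemma tau_s: "tau (\<lambda>p q. r p q + tau r p q) = (\<lambda>p q. r p q + tau r p q)"
  by (intro ext) (simp add: tau_def add.commute)

lemma SS_sym: "pairing a (SS b) = pairing b (SS a)"
  unfolding SS_def pairing_add_R
  using pairing_Tr[of a r b] pairing_Tr[of a "tau r" b] by (simp add: tau_tau add.commute)

lemma Inv1: "pairing a (sc x (SS b) + pc (SS b) x) = pairing b (sc (SS a) x + pc (SS a) x)"
proof -
  have e: "tl_map (L_odot sc pc x) (\<lambda>p q. r p q + tau r p q) = tr_map (Rmul (opsum sc pc) x) (\<lambda>p q. r p q + tau r p q)"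
    using inv unfolding invariant_def by blast
  have f1: "L_odot sc pc x = (\<lambda>y. sc x y + pc y x)" by (rule ext) (simp add: L_odot_eq)
  have f2: "Rmul (opsum sc pc) x = (\<lambda>y. sc y x + pc y x)" by (rule ext) (simp add: Rmul_eq opsum_def plus_fun_def)
  have l1: "lin (L_odot sc pc x)" unfolding f1 by (intro lin_add lin_bil_R lin_bil_L)
  have l2: "lin (Rmul (opsum sc pc) x)" unfolding f2 by (intro lin_add lin_bil_R lin_bil_L)
  have "pair2 (tl_map (L_odot sc pc x) (\<lambda>p q. r p q + tau r p q)) a b = pair2 (tr_map (Rmul (opsum sc pc) x) (\<lambda>p q. r p q + tau r p q)) a b"
    by (simp only: e)
  then show ?thesis
    unfolding pair2_tl[OF l1] pair2_tr[OF l2] unfolding tau_s Tr_s f1 f2 by simp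
qed

lemma Inv2: "pairing a (sc x (SS b) + pc x (SS b) + (sc (SS b) x + pc (SS b) x)) = pairing b (pc (SS a) x)"
proof -
  have e: "tl_map (L_star sc pc x) (tau (\<lambda>p q. r p q + tau r p q)) = tr_map (Rmul pc x) (tau (\<lambda>p q. r p q + tau r p q))"
    using inv unfolding invariant_def by blast
  have f2: "Rmul pc x = (\<lambda>y. pc y x)" by (rule ext) (simp add: Rmul_eq)
  have l1: "lin (L_star sc pc x)" unfolding L_star_fun by (intro lin_add lin_bil_R lin_bil_L)
  have l2: "lin (Rmul pc x)" unfolding f2 by (rule lin_bil_L)
  have "pair2 (tl_map (L_star sc pc x) (\<lambda>p q. r p q + tau r p q)) a b = pair2 (tr_map (Rmul pc x) (\<lambda>p q. r p q + tau r p q)) a b"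
    using e by (simp only: tau_s)
  then show ?thesis
    unfolding pair2_tl[OF l1] pair2_tr[OF l2] unfolding tau_s Tr_s f2 L_star_fun by simp
qed

lemma VI1a: "SS (actR cs x b) + SS (actR cp x b) = sc x (SS b) + pc (SS b) x"
proof (rule vec_eq_pair)
  fix k
  have "pairing (unitv k) (SS (actR cs x b) + SS (actR cp x b)) = pairing (actR cs x b) (SS (unitv k)) + pairing (actR cp x b) (SS (unitv k))"
    by (simp add: pairing_add_R SS_sym[of "unitv k"])
  also have "\<dots> = pairing b (sc (SS (unitv k)) x + pc (SS (unitv k)) x)"
    by (simp add: pairing_actR pairing_add_R)
  also have "\<dots> = pairing (unitv k) (sc x (SS b) + pc (SS b) x)" by (rule Inv1[symmetric])
  finally show "pairing (unitv k) (SS (actR cs x b) + SS (actR cp x b)) = pairing (unitv k) (sc x (SS b) + pc (SS b) x)" .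
qed

lemma VI1b: "SS (actL cs x a) + SS (actR cp x a) = sc (SS a) x + pc (SS a) x"
proof (rule vec_eq_pair)
  fix k
  have "pairing (unitv k) (SS (actL cs x a) + SS (actR cp x a)) = pairing (actL cs x a) (SS (unitv k)) + pairing (actR cp x a) (SS (unitv k))"
    by (simp add: pairing_add_R SS_sym[of "unitv k"])
  also have "\<dots> = pairing a (sc x (SS (unitv k)) + pc (SS (unitv k)) x)"
    by (simp add: pairing_actR pairing_actL pairing_add_R)
  also have "\<dots> = pairing (unitv k) (sc (SS a) x + pc (SS a) x)" by (rule Inv1)
  finally show "pairing (unitv k) (SS (actL cs x a) + SS (actR cp x a)) = pairing (unitv k) (sc (SS a) x + pc (SS a) x)" .
qed

lemma VI2a: "SS (actR cp x b) = sc x (SS b) + pc x (SS b) + (sc (SS b) x + pc (SS b) x)"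
proof (rule vec_eq_pair)
  fix k
  have "pairing (unitv k) (SS (actR cp x b)) = pairing (actR cp x b) (SS (unitv k))"
    by (simp add: SS_sym[of "unitv k"])
  also have "\<dots> = pairing b (pc (SS (unitv k)) x)"
    by (simp add: pairing_actR)
  also have "\<dots> = pairing (unitv k) (sc x (SS b) + pc x (SS b) + (sc (SS b) x + pc (SS b) x))" by (rule Inv2[symmetric])
  finally show "pairing (unitv k) (SS (actR cp x b)) = pairing (unitv k) (sc x (SS b) + pc x (SS b) + (sc (SS b) x + pc (SS b) x))" .
qed

lemma VI2b: "SS (actL cs x a) + SS (actL cp x a) + (SS (actR cs x a) + SS (actR cp x a)) = pc (SS a) x"
proof (rule vec_eq_pair)
  fix k
  have "pairing (unitv k) (SS (actL cs x a) + SS (actL cp x a) + (SS (actR cs x a) + SS (actR cp x a)))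
     = pairing (actL cs x a) (SS (unitv k)) + pairing (actL cp x a) (SS (unitv k)) + (pairing (actR cs x a) (SS (unitv k)) + pairing (actR cp x a) (SS (unitv k)))"
    by (simp add: pairing_add_R SS_sym[of "unitv k"])
  also have "\<dots> = pairing a (sc x (SS (unitv k)) + pc x (SS (unitv k)) + (sc (SS (unitv k)) x + pc (SS (unitv k)) x))"
    by (simp add: pairing_actR pairing_actL pairing_add_R)
  also have "\<dots> = pairing (unitv k) (pc (SS a) x)" by (rule Inv2)
  finally show "pairing (unitv k) (SS (actL cs x a) + SS (actL cp x a) + (SS (actR cs x a) + SS (actR cp x a))) = pairing (unitv k) (pc (SS a) x)" .
qed

fun app :: "kd \<Rightarrow> ('i \<Rightarrow> 'a) \<Rightarrow> ('i \<Rightarrow> 'a) \<Rightarrow> ('i \<Rightarrow> 'a)" where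
  "app Ls y w = sc y w" | "app Rs y w = sc w y" | "app Lp y w = pc y w" | "app Rp y w = pc w y"

fun act :: "kd \<Rightarrow> ('i \<Rightarrow> 'a) \<Rightarrow> ('i \<Rightarrow> 'a) \<Rightarrow> ('i \<Rightarrow> 'a)" where
  "act Ls y g = actL cs y g" | "act Rs y g = actR cs y g" | "act Lp y g = actL cp y g" | "act Rp y g = actR cp y g"

definition star :: "('i \<Rightarrow> 'a) \<Rightarrow> ('i \<Rightarrow> 'a) \<Rightarrow> ('i \<Rightarrow> 'a)" where
  "star y w = sc y w + pc y w + (sc w y + pc w y)"

fun frm :: "kd \<Rightarrow> ('i \<Rightarrow> 'a) \<Rightarrow> ('i \<Rightarrow> 'a) \<Rightarrow> ('i \<Rightarrow> 'a)" where
  "frm Rp y w = star y w"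
| "frm Rs y w = sc y w + pc w y - star y w"
| "frm Ls y w = sc w y + pc w y - star y w"
| "frm Lp y w = pc w y - (sc w y + pc w y) - (sc y w + pc w y) + star y w"

lemma pairing_app: "pairing g (app k y w) = pairing (act k y g) w"
  by (cases k) (simp_all add: pairing_actL pairing_actR)

lemma SS_act: "SS (act k y a) = frm k y (SS a)"
proof -
  have 1: "SS (actR cp y a) = star y (SS a)" using VI2a[of y a] by (simp only: star_def)
  have 2: "SS (actR cs y a) = sc y (SS a) + pc (SS a) y - star y (SS a)"
    unfolding eq_diff_eq 1[symmetric] by (rule VI1a)
  have 3: "SS (actL cs y a) = sc (SS a) y + pc (SS a) y - star y (SS a)"
    unfolding eq_diff_eq 1[symmetric] by (rule VI1b)
  have 4: "SS (actL cp y a) = pc (SS a) y - SS (actL cs y a) - (SS (actR cs y a) + SS (actR cp y a))"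
    using VI2b[of y a] by (simp add: algebra_simps)
  show ?thesis
  proof (cases k)
    case Rp then show ?thesis using 1 by simp
  next
    case Rs then show ?thesis using 2 by simp
  next
    case Ls then show ?thesis using 3 by simp
  next
    case Lp
    have "SS (act k y a) = SS (actL cp y a)" using Lp by simp
    also have "\<dots> = pc (SS a) y - (sc (SS a) y + pc (SS a) y - star y (SS a)) - ((sc y (SS a) + pc (SS a) y - star y (SS a)) + star y (SS a))"
      by (simp only: 4 3 2 1)
    also have "\<dots> = frm k y (SS a)" using Lp by (simp add: algebra_simps)
    finally show ?thesis .
  qed
qed

lemma TR1: "pairing g (app k y (SS b)) = pairing b (frm k y (SS g))"
proof -
  have "pairing g (app k y (SS b)) = pairing (act k y g) (SS b)" by (rule pairing_app)
  also have "\<dots> = pairing b (SS (act k y g))" by (rule SS_sym)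
  also have "\<dots> = pairing b (frm k y (SS g))" by (simp only: SS_act)
  finally show ?thesis .
qed

lemma TR2: "pairing g (app k1 y1 (app k2 y2 (SS b))) = pairing b (frm k2 y2 (frm k1 y1 (SS g)))"
proof -
  have "pairing g (app k1 y1 (app k2 y2 (SS b))) = pairing (act k1 y1 g) (app k2 y2 (SS b))" by (rule pairing_app)
  also have "\<dots> = pairing b (frm k2 y2 (SS (act k1 y1 g)))" by (rule TR1)
  also have "\<dots> = pairing b (frm k2 y2 (frm k1 y1 (SS g)))" by (simp only: SS_act)
  finally show ?thesis .
qed

end



context LDc begin

lemma pTr_succ: "pairing c (Tr r (succ_r sc pc r a b)) = pairing (succ_r sc pc r a b) (Tr (tau r) c)"
  by (rule pairing_Tr)
lemma pTr_prec: "pairing c (Tr r (prec_r sc pc r a b)) = pairing (prec_r sc pc r a b) (Tr (tau r) c)"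
  by (rule pairing_Tr)
lemma pU_succ: "pairing c (Tr (tau r) (succ_r sc pc r a b)) = pairing (succ_r sc pc r a b) (Tr r c)"
  using pairing_Tr[of c "tau r"] by (simp add: tau_tau)
lemma pU_prec: "pairing c (Tr (tau r) (prec_r sc pc r a b)) = pairing (prec_r sc pc r a b) (Tr r c)"
  using pairing_Tr[of c "tau r"] by (simp add: tau_tau)

lemmas EXPL = bil_add_L bil_add_R bil_diff_L bil_diff_R bil_uminus_L bil_uminus_R
  pairing_add_L pairing_add_R pairing_diff_L pairing_diff_R pairing_uminus_L pairing_uminus_R
  Tr_add Tr_diff Tr_uminus opsum_eq SS_def
lemmas EXP = EXPL pTr_succ pTr_prec pU_succ pU_prec succ_pair prec_pair Sform_def

context
  assumes Sz: "\<And>a b c. Sform cs cp r a b c = 0"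
begin

lemma homT_succ: "Tr r (succ_r sc pc r \<zeta> \<eta>) = sc (Tr r \<zeta>) (Tr r \<eta>)"
proof (rule vec_eq_pair)
  fix k
  have "pairing \<xi> (Tr r (succ_r sc pc r \<zeta> \<eta>)) - pairing \<xi> (sc (Tr r \<zeta>) (Tr r \<eta>)) = 0" for \<xi>
  proof -
      have f0: "pairing \<eta> (sc (Tr r \<zeta>) (SS \<xi>) + pc (Tr r \<zeta>) (SS \<xi>) + (sc (SS \<xi>) (Tr r \<zeta>) + pc (SS \<xi>) (Tr r \<zeta>))) - pairing \<xi> (pc (SS \<eta>) (Tr r \<zeta>)) = 0"
        using Inv2[of \<eta> "Tr r \<zeta>" \<xi>] by (simp only: diff_self)
      have f1: "pairing \<xi> (sc (Tr r \<zeta>) (SS \<eta>) + pc (SS \<eta>) (Tr r \<zeta>)) - pairing \<eta> (sc (SS \<xi>) (Tr r \<zeta>) + pc (SS \<xi>) (Tr r \<zeta>)) = 0"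
        using Inv1[of \<xi> "Tr r \<zeta>" \<eta>] by (simp only: diff_self)
      have f2: "pairing \<zeta> (sc (Tr (tau r) \<eta>) (SS \<xi>) + pc (Tr (tau r) \<eta>) (SS \<xi>) + (sc (SS \<xi>) (Tr (tau r) \<eta>) + pc (SS \<xi>) (Tr (tau r) \<eta>))) - pairing \<xi> (pc (SS \<zeta>) (Tr (tau r) \<eta>)) = 0"
        using Inv2[of \<zeta> "Tr (tau r) \<eta>" \<xi>] by (simp only: diff_self)
      have f3: "pairing \<zeta> (sc (Tr (tau r) \<eta>) (SS \<xi>) + pc (SS \<xi>) (Tr (tau r) \<eta>)) - pairing \<xi> (sc (SS \<zeta>) (Tr (tau r) \<eta>) + pc (SS \<zeta>) (Tr (tau r) \<eta>)) = 0"
        using Inv1[of \<zeta> "Tr (tau r) \<eta>" \<xi>] by (simp only: diff_self)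
      have f4: "Sform cs cp r \<xi> \<zeta> \<eta> = 0"
        by (rule Sz)
      have comb: "pairing \<xi> (Tr r (succ_r sc pc r \<zeta> \<eta>)) - pairing \<xi> (sc (Tr r \<zeta>) (Tr r \<eta>)) = - (pairing \<eta> (sc (Tr r \<zeta>) (SS \<xi>) + pc (Tr r \<zeta>) (SS \<xi>) + (sc (SS \<xi>) (Tr r \<zeta>) + pc (SS \<xi>) (Tr r \<zeta>))) - pairing \<xi> (pc (SS \<eta>) (Tr r \<zeta>))) - (pairing \<xi> (sc (Tr r \<zeta>) (SS \<eta>) + pc (SS \<eta>) (Tr r \<zeta>)) - pairing \<eta> (sc (SS \<xi>) (Tr r \<zeta>) + pc (SS \<xi>) (Tr r \<zeta>))) + (pairing \<zeta> (sc (Tr (tau r) \<eta>) (SS \<xi>) + pc (Tr (tau r) \<eta>) (SS \<xi>) + (sc (SS \<xi>) (Tr (tau r) \<eta>) + pc (SS \<xi>) (Tr (tau r) \<eta>))) - pairing \<xi> (pc (SS \<zeta>) (Tr (tau r) \<eta>))) - (pairing \<zeta> (sc (Tr (tau r) \<eta>) (SS \<xi>) + pc (SS \<xi>) (Tr (tau r) \<eta>)) - pairing \<xi> (sc (SS \<zeta>) (Tr (tau r) \<eta>) + pc (SS \<zeta>) (Tr (tau r) \<eta>))) + (Sform cs cp r \<xi> \<zeta> \<eta>)"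
        by (simp add: EXP algebra_simps)
      show "pairing \<xi> (Tr r (succ_r sc pc r \<zeta> \<eta>)) - pairing \<xi> (sc (Tr r \<zeta>) (Tr r \<eta>)) = 0"
        unfolding comb f0 f1 f2 f3 f4 by simp
  qed
  then show "pairing (unitv k) (Tr r (succ_r sc pc r \<zeta> \<eta>)) = pairing (unitv k) (sc (Tr r \<zeta>) (Tr r \<eta>))"
    by simp
qed

lemma homT_prec: "Tr r (prec_r sc pc r \<zeta> \<eta>) = pc (Tr r \<zeta>) (Tr r \<eta>)"
proof (rule vec_eq_pair)
  fix k
  have "pairing \<xi> (Tr r (prec_r sc pc r \<zeta> \<eta>)) - pairing \<xi> (pc (Tr r \<zeta>) (Tr r \<eta>)) = 0" for \<xi>
  proof -
      have f0: "pairing \<zeta> (sc (Tr r \<eta>) (SS \<xi>) + pc (Tr r \<eta>) (SS \<xi>) + (sc (SS \<xi>) (Tr r \<eta>) + pc (SS \<xi>) (Tr r \<eta>))) - pairing \<xi> (pc (SS \<zeta>) (Tr r \<eta>)) = 0"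
        using Inv2[of \<zeta> "Tr r \<eta>" \<xi>] by (simp only: diff_self)
      have f1: "Sform cs cp r \<eta> \<xi> \<zeta> = 0"
        by (rule Sz)
      have f2: "pairing \<eta> (sc (Tr (tau r) \<zeta>) (SS \<xi>) + pc (Tr (tau r) \<zeta>) (SS \<xi>) + (sc (SS \<xi>) (Tr (tau r) \<zeta>) + pc (SS \<xi>) (Tr (tau r) \<zeta>))) - pairing \<xi> (pc (SS \<eta>) (Tr (tau r) \<zeta>)) = 0"
        using Inv2[of \<eta> "Tr (tau r) \<zeta>" \<xi>] by (simp only: diff_self)
      have f3: "pairing \<eta> (sc (Tr (tau r) \<zeta>) (SS \<xi>) + pc (SS \<xi>) (Tr (tau r) \<zeta>)) - pairing \<xi> (sc (SS \<eta>) (Tr (tau r) \<zeta>) + pc (SS \<eta>) (Tr (tau r) \<zeta>)) = 0"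
        using Inv1[of \<eta> "Tr (tau r) \<zeta>" \<xi>] by (simp only: diff_self)
      have f4: "Sform cs cp r \<xi> \<eta> \<zeta> = 0"
        by (rule Sz)
      have comb: "pairing \<xi> (Tr r (prec_r sc pc r \<zeta> \<eta>)) - pairing \<xi> (pc (Tr r \<zeta>) (Tr r \<eta>)) = (pairing \<zeta> (sc (Tr r \<eta>) (SS \<xi>) + pc (Tr r \<eta>) (SS \<xi>) + (sc (SS \<xi>) (Tr r \<eta>) + pc (SS \<xi>) (Tr r \<eta>))) - pairing \<xi> (pc (SS \<zeta>) (Tr r \<eta>))) - (Sform cs cp r \<eta> \<xi> \<zeta>) - (pairing \<eta> (sc (Tr (tau r) \<zeta>) (SS \<xi>) + pc (Tr (tau r) \<zeta>) (SS \<xi>) + (sc (SS \<xi>) (Tr (tau r) \<zeta>) + pc (SS \<xi>) (Tr (tau r) \<zeta>))) - pairing \<xi> (pc (SS \<eta>) (Tr (tau r) \<zeta>))) + (pairing \<eta> (sc (Tr (tau r) \<zeta>) (SS \<xi>) + pc (SS \<xi>) (Tr (tau r) \<zeta>)) - pairing \<xi> (sc (SS \<eta>) (Tr (tau r) \<zeta>) + pc (SS \<eta>) (Tr (tau r) \<zeta>))) - (Sform cs cp r \<xi> \<eta> \<zeta>)"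
        by (simp add: EXP algebra_simps)
      show "pairing \<xi> (Tr r (prec_r sc pc r \<zeta> \<eta>)) - pairing \<xi> (pc (Tr r \<zeta>) (Tr r \<eta>)) = 0"
        unfolding comb f0 f1 f2 f3 f4 by simp
  qed
  then show "pairing (unitv k) (Tr r (prec_r sc pc r \<zeta> \<eta>)) = pairing (unitv k) (pc (Tr r \<zeta>) (Tr r \<eta>))"
    by simp
qed

lemma homU_succ: "Tr (tau r) (succ_r sc pc r \<zeta> \<eta>) = - sc (Tr (tau r) \<zeta>) (Tr (tau r) \<eta>)"
proof (rule vec_eq_pair)
  fix k
  have "- pairing \<xi> (Tr (tau r) (succ_r sc pc r \<zeta> \<eta>)) - pairing \<xi> (sc (Tr (tau r) \<zeta>) (Tr (tau r) \<eta>)) = 0" for \<xi>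
  proof -
      have f0: "Sform cs cp r \<xi> \<zeta> \<eta> = 0"
        by (rule Sz)
      have comb: "- pairing \<xi> (Tr (tau r) (succ_r sc pc r \<zeta> \<eta>)) - pairing \<xi> (sc (Tr (tau r) \<zeta>) (Tr (tau r) \<eta>)) = (Sform cs cp r \<xi> \<zeta> \<eta>)"
        by (simp add: EXP algebra_simps)
      show "- pairing \<xi> (Tr (tau r) (succ_r sc pc r \<zeta> \<eta>)) - pairing \<xi> (sc (Tr (tau r) \<zeta>) (Tr (tau r) \<eta>)) = 0"
        unfolding comb f0 by simp
  qed
  then have h: "- pairing (unitv k) (Tr (tau r) (succ_r sc pc r \<zeta> \<eta>)) = pairing (unitv k) (sc (Tr (tau r) \<zeta>) (Tr (tau r) \<eta>))"
    by (simp only: right_minus_eq)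
  show "pairing (unitv k) (Tr (tau r) (succ_r sc pc r \<zeta> \<eta>)) = pairing (unitv k) (- sc (Tr (tau r) \<zeta>) (Tr (tau r) \<eta>))"
    by (metis h minus_minus pairing_uminus_R)
qed

lemma homU_prec: "Tr (tau r) (prec_r sc pc r \<zeta> \<eta>) = - pc (Tr (tau r) \<zeta>) (Tr (tau r) \<eta>)"
proof (rule vec_eq_pair)
  fix k
  have "- pairing \<xi> (Tr (tau r) (prec_r sc pc r \<zeta> \<eta>)) - pairing \<xi> (pc (Tr (tau r) \<zeta>) (Tr (tau r) \<eta>)) = 0" for \<xi>
  proof -
      have f0: "Sform cs cp r \<eta> \<zeta> \<xi> = 0"
        by (rule Sz)
      have f1: "pairing \<zeta> (sc (Tr r \<eta>) (SS \<xi>) + pc (SS \<xi>) (Tr r \<eta>)) - pairing \<xi> (sc (SS \<zeta>) (Tr r \<eta>) + pc (SS \<zeta>) (Tr r \<eta>)) = 0"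
        using Inv1[of \<zeta> "Tr r \<eta>" \<xi>] by (simp only: diff_self)
      have f2: "pairing \<zeta> (sc (Tr r \<xi>) (SS \<eta>) + pc (SS \<eta>) (Tr r \<xi>)) - pairing \<eta> (sc (SS \<zeta>) (Tr r \<xi>) + pc (SS \<zeta>) (Tr r \<xi>)) = 0"
        using Inv1[of \<zeta> "Tr r \<xi>" \<eta>] by (simp only: diff_self)
      have f3: "pairing \<eta> (sc (Tr (tau r) \<zeta>) (SS \<xi>) + pc (SS \<xi>) (Tr (tau r) \<zeta>)) - pairing \<xi> (sc (SS \<eta>) (Tr (tau r) \<zeta>) + pc (SS \<eta>) (Tr (tau r) \<zeta>)) = 0"
        using Inv1[of \<eta> "Tr (tau r) \<zeta>" \<xi>] by (simp only: diff_self)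
      have f4: "Sform cs cp r \<xi> \<zeta> \<eta> = 0"
        by (rule Sz)
      have f5: "pairing \<xi> (sc (Tr (tau r) \<zeta>) (SS \<eta>) + pc (Tr (tau r) \<zeta>) (SS \<eta>) + (sc (SS \<eta>) (Tr (tau r) \<zeta>) + pc (SS \<eta>) (Tr (tau r) \<zeta>))) - pairing \<eta> (pc (SS \<xi>) (Tr (tau r) \<zeta>)) = 0"
        using Inv2[of \<xi> "Tr (tau r) \<zeta>" \<eta>] by (simp only: diff_self)
      have comb: "- pairing \<xi> (Tr (tau r) (prec_r sc pc r \<zeta> \<eta>)) - pairing \<xi> (pc (Tr (tau r) \<zeta>) (Tr (tau r) \<eta>)) = - (Sform cs cp r \<eta> \<zeta> \<xi>) - (pairing \<zeta> (sc (Tr r \<eta>) (SS \<xi>) + pc (SS \<xi>) (Tr r \<eta>)) - pairing \<xi> (sc (SS \<zeta>) (Tr r \<eta>) + pc (SS \<zeta>) (Tr r \<eta>))) - (pairing \<zeta> (sc (Tr r \<xi>) (SS \<eta>) + pc (SS \<eta>) (Tr r \<xi>)) - pairing \<eta> (sc (SS \<zeta>) (Tr r \<xi>) + pc (SS \<zeta>) (Tr r \<xi>))) - (pairing \<eta> (sc (Tr (tau r) \<zeta>) (SS \<xi>) + pc (SS \<xi>) (Tr (tau r) \<zeta>)) - pairing \<xi> (sc (SS \<eta>) (Tr (tau r) \<zeta>) + pc (SS \<eta>) (Tr (tau r) \<zeta>))) - (Sform cs cp r \<xi> \<zeta> \<eta>) - (pairing \<xi> (sc (Tr (tau r) \<zeta>)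 (SS \<eta>) + pc (Tr (tau r) \<zeta>) (SS \<eta>) + (sc (SS \<eta>) (Tr (tau r) \<zeta>) + pc (SS \<eta>) (Tr (tau r) \<zeta>))) - pairing \<eta> (pc (SS \<xi>) (Tr (tau r) \<zeta>)))"
        by (simp add: EXP algebra_simps)
      show "- pairing \<xi> (Tr (tau r) (prec_r sc pc r \<zeta> \<eta>)) - pairing \<xi> (pc (Tr (tau r) \<zeta>) (Tr (tau r) \<eta>)) = 0"
        unfolding comb f0 f1 f2 f3 f4 f5 by simp
  qed
  then have h: "- pairing (unitv k) (Tr (tau r) (prec_r sc pc r \<zeta> \<eta>)) = pairing (unitv k) (pc (Tr (tau r) \<zeta>) (Tr (tau r) \<eta>))"
    by (simp only: right_minus_eq)
  show "pairing (unitv k) (Tr (tau r) (prec_r sc pc r \<zeta> \<eta>)) = pairing (unitv k) (- pc (Tr (tau r) \<zeta>) (Tr (tau r) \<eta>))"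
    by (metis h minus_minus pairing_uminus_R)
qed

end

lemma S_from_hom:
  assumes hyp: "\<And>\<zeta> \<eta>. Tr r (opsum (succ_r sc pc r) (prec_r sc pc r) \<zeta> \<eta>) = opsum sc pc (Tr r \<zeta>) (Tr r \<eta>)"
  shows "Sform cs cp r \<zeta> \<eta> \<xi> = 0"
proof -
  have f0: "pairing \<eta> (sc (Tr r \<zeta>) (SS \<xi>) + pc (SS \<xi>) (Tr r \<zeta>)) - pairing \<xi> (sc (SS \<eta>) (Tr r \<zeta>) + pc (SS \<eta>) (Tr r \<zeta>)) = 0"
    using Inv1[of \<eta> "Tr r \<zeta>" \<xi>] by (simp only: diff_self)
  have f1: "pairing \<eta> (Tr r (opsum (succ_r sc pc r) (prec_r sc pc r) \<zeta> \<xi>)) - pairing \<eta> (opsum sc pc (Tr r \<zeta>) (Tr r \<xi>)) = 0"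
    using hyp[of \<zeta> \<xi>, THEN arg_cong[where f="pairing \<eta>"]] by (simp only: diff_self)
  have f2: "pairing \<zeta> (Tr r (opsum (succ_r sc pc r) (prec_r sc pc r) \<eta> \<xi>)) - pairing \<zeta> (opsum sc pc (Tr r \<eta>) (Tr r \<xi>)) = 0"
    using hyp[of \<eta> \<xi>, THEN arg_cong[where f="pairing \<zeta>"]] by (simp only: diff_self)
  have f3: "pairing \<eta> (sc (Tr r \<xi>) (SS \<zeta>) + pc (SS \<zeta>) (Tr r \<xi>)) - pairing \<zeta> (sc (SS \<eta>) (Tr r \<xi>) + pc (SS \<eta>) (Tr r \<xi>)) = 0"
    using Inv1[of \<eta> "Tr r \<xi>" \<zeta>] by (simp only: diff_self)
  have f4: "pairing \<eta> (Tr r (opsum (succ_r sc pc r) (prec_r sc pc r) \<xi> \<zeta>)) - pairing \<eta> (opsum sc pc (Tr r \<xi>) (Tr r \<zeta>)) = 0"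
    using hyp[of \<xi> \<zeta>, THEN arg_cong[where f="pairing \<eta>"]] by (simp only: diff_self)
  have f5: "pairing \<eta> (sc (Tr (tau r) \<zeta>) (SS \<xi>) + pc (SS \<xi>) (Tr (tau r) \<zeta>)) - pairing \<xi> (sc (SS \<eta>) (Tr (tau r) \<zeta>) + pc (SS \<eta>) (Tr (tau r) \<zeta>)) = 0"
    using Inv1[of \<eta> "Tr (tau r) \<zeta>" \<xi>] by (simp only: diff_self)
  have comb: "Sform cs cp r \<zeta> \<eta> \<xi> = - (pairing \<eta> (sc (Tr r \<zeta>) (SS \<xi>) + pc (SS \<xi>) (Tr r \<zeta>)) - pairing \<xi> (sc (SS \<eta>) (Tr r \<zeta>) + pc (SS \<eta>) (Tr r \<zeta>))) - (pairing \<eta> (Tr r (opsum (succ_r sc pc r) (prec_r sc pc r) \<zeta> \<xi>)) - pairing \<eta> (opsum sc pc (Tr r \<zeta>) (Tr r \<xi>))) + (pairing \<zeta> (Tr r (opsum (succ_r sc pc r) (prec_r sc pc r) \<eta> \<xi>)) - pairing \<zeta> (opsum sc pc (Tr r \<eta>) (Tr r \<xi>))) - (pairing \<eta> (sc (Tr r \<xi>) (SS \<zeta>) + pc (SS \<zeta>) (Tr r \<xi>)) - pairing \<zeta> (sc (SS \<eta>) (Tr r \<xi>) + pc (SS \<eta>) (Tr r \<xi>))) - (pairing \<eta> (Tr r (opsum (succ_r sc pc r) (prec_r sc pc r) \<xi> \<zeta>)) - pairing \<eta> (opsum sc pc (Tr r \<xi>) (Tr r \<zeta>))) - (pairing \<eta>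 (sc (Tr (tau r) \<zeta>) (SS \<xi>) + pc (SS \<xi>) (Tr (tau r) \<zeta>)) - pairing \<xi> (sc (SS \<eta>) (Tr (tau r) \<zeta>) + pc (SS \<eta>) (Tr (tau r) \<zeta>)))"
    by (simp add: EXP algebra_simps)
  show "Sform cs cp r \<zeta> \<eta> \<xi> = 0"
    unfolding comb f0 f1 f2 f3 f4 f5 by simp
qed


lemma cadd: "a = b \<Longrightarrow> c = d \<Longrightarrow> a + c = b + d" by simp
lemma csub: "a = b \<Longrightarrow> c = d \<Longrightarrow> a - c = b - d" by simp
lemma cneg: "a = b \<Longrightarrow> - a = - b" by simp
lemma cmul: "a = b \<Longrightarrow> c * a = c * b" by simp
lemma lc0: fixes A X Y :: "'b::ab_group_add" shows "X = Y \<Longrightarrow> A = X - Y \<Longrightarrow> A = 0" by simp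

lemma LD1v: "sc (sc x y + pc x y) z = sc x (sc y z) - sc y (sc x z)"
proof -
  have "sc (opsum sc pc x y) z = (\<lambda>k. sc x (sc y z) k - sc y (sc x z) k)" using LD unfolding leib_dend_def by blast
  then show ?thesis by (simp only: opsum_eq fun_diff_def)
qed
lemma LD2v: "pc y (sc x z + pc x z) + pc (sc x y) z = sc x (pc y z)"
proof -
  have "(\<lambda>k. pc y (opsum sc pc x z) k + pc (sc x y) z k) = sc x (pc y z)" using LD unfolding leib_dend_def by blast
  then show ?thesis by (simp only: opsum_eq plus_fun_def)
qed
lemma LD3v: "pc x (sc y z + pc y z) = pc (pc x y) z + sc y (pc x z)"
proof -
  have "pc x (opsum sc pc y z) = (\<lambda>k. pc (pc x y) z k + sc y (pc x z) k)" using LD unfolding leib_dend_def by blast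
  then show ?thesis by (simp only: opsum_eq plus_fun_def)
qed
lemma LD1p: "pairing g (sc (sc x y + pc x y) z) = pairing g (sc x (sc y z) - sc y (sc x z))"
  by (simp only: LD1v)
lemma LD2p: "pairing g (pc y (sc x z + pc x z) + pc (sc x y) z) = pairing g (sc x (pc y z))"
  by (simp only: LD2v)
lemma LD3p: "pairing g (pc x (sc y z + pc y z)) = pairing g (pc (pc x y) z + sc y (pc x z))"
  by (simp only: LD3v)

context
  assumes Sz: "\<And>a b c. Sform cs cp r a b c = 0"
begin
lemmas EXPB = EXPL succ_pair prec_pair homT_succ[OF Sz] homT_prec[OF Sz] homU_succ[OF Sz] homU_prec[OF Sz]
  app.simps frm.simps star_def

lemma dualLD1: "succ_r sc pc r (succ_r sc pc r \<zeta> \<eta> + prec_r sc pc r \<zeta> \<eta>) \<xi> = succ_r sc pc r \<zeta> (succ_r sc pc r \<eta> \<xi>) - succ_r sc pc r \<eta> (succ_r sc pc r \<zeta> \<xi>)"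
proof (rule covec_eq_pair)
  fix v
  have "pairing (succ_r sc pc r (succ_r sc pc r \<zeta> \<eta> + prec_r sc pc r \<zeta> \<eta>) \<xi>) v - pairing (succ_r sc pc r \<zeta> (succ_r sc pc r \<eta> \<xi>) - succ_r sc pc r \<eta> (succ_r sc pc r \<zeta> \<xi>)) v = 0"
  proof -
    note f0 = LD1p[where g="\<zeta>" and x="SS \<eta>" and y="Tr r \<xi>" and z="v"]
    note f1 = LD1p[where g="\<zeta>" and x="SS \<eta>" and y="v" and z="Tr r \<xi>"]
    note f2 = LD1p[where g="\<zeta>" and x="SS \<xi>" and y="v" and z="SS \<eta>"]
    note f3 = LD1p[where g="\<eta>" and x="SS \<xi>" and y="v" and z="SS \<zeta>"]
    note f4 = LD1p[where g="\<zeta>" and x="Tr r \<eta>" and y="v" and z="SS \<xi>"]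
    note f5 = LD1p[where g="\<zeta>" and x="Tr r \<eta>" and y="v" and z="Tr r \<xi>"]
    note f6 = LD1p[where g="\<zeta>" and x="Tr r \<xi>" and y="v" and z="SS \<eta>"]
    note f7 = LD1p[where g="\<xi>" and x="Tr r \<zeta>" and y="Tr r \<eta>" and z="v"]
    note f8 = LD1p[where g="\<eta>" and x="Tr r \<zeta>" and y="v" and z="SS \<xi>"]
    note f9 = LD1p[where g="\<eta>" and x="Tr r \<zeta>" and y="v" and z="Tr r \<xi>"]
    note f10 = LD1p[where g="\<zeta>" and x="v" and y="SS \<eta>" and z="SS \<xi>"]
    note f11 = LD1p[where g="\<zeta>" and x="v" and y="SS \<eta>" and z="Tr r \<xi>"]
    note f12 = LD1p[where g="\<zeta>" and x="v" and y="SS \<xi>" and z="SS \<eta>"]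
    note f13 = LD1p[where g="\<eta>" and x="v" and y="SS \<xi>" and z="SS \<zeta>"]
    note f14 = LD1p[where g="\<eta>" and x="v" and y="SS \<zeta>" and z="Tr r \<xi>"]
    note f15 = LD2p[where g="\<zeta>" and x="SS \<eta>" and y="SS \<xi>" and z="v"]
    note f16 = LD2p[where g="\<zeta>" and x="SS \<eta>" and y="Tr r \<xi>" and z="v"]
    note f17 = LD2p[where g="\<zeta>" and x="SS \<eta>" and y="v" and z="Tr r \<xi>"]
    note f18 = LD2p[where g="\<eta>" and x="SS \<xi>" and y="v" and z="SS \<zeta>"]
    note f19 = LD2p[where g="\<eta>" and x="SS \<zeta>" and y="SS \<xi>" and z="v"]
    note f20 = LD2p[where g="\<eta>" and x="SS \<zeta>" and y="Tr r \<xi>" and z="v"]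
    note f21 = LD2p[where g="\<eta>" and x="SS \<zeta>" and y="v" and z="Tr r \<xi>"]
    note f22 = LD2p[where g="\<zeta>" and x="Tr r \<eta>" and y="SS \<xi>" and z="v"]
    note f23 = LD2p[where g="\<zeta>" and x="Tr r \<eta>" and y="Tr r \<xi>" and z="v"]
    note f24 = LD2p[where g="\<zeta>" and x="Tr r \<xi>" and y="SS \<eta>" and z="v"]
    note f25 = LD2p[where g="\<zeta>" and x="Tr r \<xi>" and y="v" and z="SS \<eta>"]
    note f26 = LD2p[where g="\<eta>" and x="Tr r \<zeta>" and y="SS \<xi>" and z="v"]
    note f27 = LD2p[where g="\<xi>" and x="Tr r \<zeta>" and y="Tr r \<eta>" and z="v"]
    note f28 = LD2p[where g="\<eta>" and x="Tr r \<zeta>" and y="Tr r \<xi>" and z="v"]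
    note f29 = LD2p[where g="\<zeta>" and x="v" and y="SS \<eta>" and z="Tr r \<xi>"]
    note f30 = LD2p[where g="\<zeta>" and x="v" and y="SS \<xi>" and z="Tr r \<eta>"]
    note f31 = LD2p[where g="\<zeta>" and x="v" and y="Tr r \<xi>" and z="SS \<eta>"]
    note f32 = LD2p[where g="\<zeta>" and x="v" and y="Tr r \<xi>" and z="Tr r \<eta>"]
    note f33 = LD3p[where g="\<zeta>" and x="SS \<eta>" and y="v" and z="Tr r \<xi>"]
    note f34 = LD3p[where g="\<eta>" and x="SS \<xi>" and y="SS \<zeta>" and z="v"]
    note f35 = LD3p[where g="\<zeta>" and x="SS \<xi>" and y="v" and z="Tr r \<eta>"]
    note f36 = LD3p[where g="\<eta>" and x="SS \<zeta>" and y="Tr r \<xi>" and z="v"]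
    note f37 = LD3p[where g="\<zeta>" and x="Tr r \<xi>" and y="v" and z="SS \<eta>"]
    note f38 = LD3p[where g="\<zeta>" and x="Tr r \<xi>" and y="v" and z="Tr r \<eta>"]
    note f39 = LD3p[where g="\<xi>" and x="Tr r \<zeta>" and y="Tr r \<eta>" and z="v"]
    note f40 = LD3p[where g="\<zeta>" and x="v" and y="SS \<eta>" and z="SS \<xi>"]
    note f41 = LD3p[where g="\<zeta>" and x="v" and y="SS \<eta>" and z="Tr r \<xi>"]
    note f42 = LD3p[where g="\<eta>" and x="v" and y="SS \<zeta>" and z="SS \<xi>"]
    note f43 = LD3p[where g="\<eta>" and x="v" and y="SS \<zeta>" and z="Tr r \<xi>"]
    note f44 = TR2[of "\<eta>" Rp "v" Lp "SS \<xi>" "\<zeta>"]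
    note f45 = TR2[of "\<eta>" Rp "v" Rp "Tr r \<xi>" "\<zeta>"]
    note f46 = TR2[of "\<eta>" Rp "Tr r \<xi>" Lp "v" "\<zeta>"]
    note f47 = TR2[of "\<eta>" Rp "v" Rs "Tr r \<xi>" "\<zeta>"]
    note f48 = TR2[of "\<eta>" Rp "Tr r \<xi>" Ls "v" "\<zeta>"]
    note f49 = TR1[of "\<eta>" Rp "sc (SS \<xi>) (v)" "\<zeta>"]
    note f50 = TR1[of "\<eta>" Rp "sc (v) (Tr r \<xi>)" "\<zeta>"]
    note f51 = TR2[of "\<eta>" Rs "Tr r \<xi>" Lp "v" "\<zeta>"]
    note f52 = TR1[of "\<eta>" Rs "pc (Tr r \<xi>) (v)" "\<zeta>"]
    note f53 = TR1[of "\<eta>" Rs "sc (SS \<xi>) (v)" "\<zeta>"]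
    note f54 = TR1[of "\<eta>" Rs "sc (Tr r \<xi>) (v)" "\<zeta>"]
    note f55 = TR2[of "\<eta>" Ls "v" Lp "SS \<xi>" "\<zeta>"]
    note f56 = TR2[of "\<eta>" Ls "v" Rs "Tr r \<xi>" "\<zeta>"]
    note f57 = TR2[of "\<xi>" Rp "v" Ls "SS \<eta>" "\<zeta>"]
    note f58 = TR2[of "\<xi>" Rp "v" Rs "SS \<zeta>" "\<eta>"]
    note f59 = TR1[of "\<xi>" Lp "sc (v) (SS \<eta>)" "\<zeta>"]
    note f60 = TR2[of "\<xi>" Rp "SS \<zeta>" Ls "v" "\<eta>"]
    note f61 = TR2[of "\<xi>" Lp "v" Ls "SS \<zeta>" "\<eta>"]
    note f62 = TR2[of "\<xi>" Lp "v" Rs "SS \<eta>" "\<zeta>"]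
    note f63 = TR1[of "\<xi>" Ls "pc (v) (SS \<eta>)" "\<zeta>"]
    note f64 = TR2[of "\<xi>" Rs "SS \<zeta>" Lp "v" "\<eta>"]
    note f65 = TR1[of "\<xi>" Ls "sc (v) (SS \<eta>)" "\<zeta>"]
    note f66 = TR2[of "\<xi>" Rs "SS \<zeta>" Ls "v" "\<eta>"]
    note f67 = TR2[of "\<xi>" Ls "SS \<eta>" Lp "v" "\<zeta>"]
    note f68 = TR1[of "\<xi>" Rs "pc (v) (SS \<zeta>)" "\<eta>"]
    note f69 = TR2[of "\<zeta>" Rp "v" Ls "Tr r \<xi>" "\<eta>"]
    note f70 = TR1[of "\<zeta>" Lp "sc (v) (Tr r \<xi>)" "\<eta>"]
    note f71 = TR1[of "\<zeta>" Rp "sc (Tr r \<xi>) (v)" "\<eta>"]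
    note f72 = TR2[of "\<zeta>" Lp "v" Rs "Tr r \<xi>" "\<eta>"]
    note f73 = TR2[of "\<zeta>" Lp "v" Ls "Tr r \<xi>" "\<eta>"]
    note f74 = TR2[of "\<zeta>" Rs "v" Rp "Tr r \<xi>" "\<eta>"]
    note f75 = TR2[of "\<zeta>" Rs "v" Rs "Tr r \<xi>" "\<eta>"]
    note f76 = TR1[of "\<zeta>" Ls "sc (Tr r \<xi>) (v)" "\<eta>"]
    note f77 = TR1[of "\<zeta>" Rs "sc (SS \<xi>) (v)" "\<eta>"]
    note f78 = TR1[of "\<zeta>" Rs "sc (v) (Tr r \<xi>)" "\<eta>"]
    note f79 = TR2[of "\<zeta>" Ls "v" Rp "Tr r \<xi>" "\<eta>"]
    note F = csub[OF csub[OF csub[OF cadd[OF csub[OF csub[OF cadd[OF csub[OF cadd[OF csub[OF cadd[OF cadd[OF csub[OF csub[OF cadd[OF csub[OF cadd[OF csub[OF cadd[OF csub[OF cadd[OF csub[OF cadd[OF cadd[OF cadd[OF cadd[OF cadd[OF csub[OF cadd[OF cadd[OF cadd[OF cadd[OF cadd[OF cadd[OF cadd[OF cadd[OF csub[OF cadd[OF csub[OF cadd[OF cadd[OF cadd[OF csub[OF cadd[OF csub[OF cadd[OF csub[OF csub[OF cadd[OF cadd[OF cadd[OF csub[OF csub[OF cadd[OF csub[OF csub[OF cadd[OF csub[OF cadd[OF csub[OF csub[OF cadd[OF cadd[OF csub[OF cadd[OF cadd[OF cadd[OF cadd[OF cadd[OF csub[OF csub[OF cadd[OF csub[OF csub[OF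 cadd[OF csub[OF cadd[OF cadd[OF csub[OF f0 f1] f2] f3] f4] f5] f6] f7] f8] f9] f10] f11] f12] f13] f14] f15] f16] f17] f18] f19] f20] f21] f22] f23] f24] f25] f26] f27] f28] f29] f30] cmul[OF f31, of "2"]] f32] f33] f34] f35] f36] f37] f38] f39] f40] f41] f42] f43] f44] f45] f46] cmul[OF f47, of "2"]] f48] f49] f50] f51] f52] f53] f54] f55] cmul[OF f56, of "2"]] f57] f58] f59] f60] f61] f62] f63] f64] f65] f66] f67] f68] f69] f70] f71] f72] f73] f74] f75] f76] f77] f78] f79]
    show "pairing (succ_r sc pc r (succ_r sc pc r \<zeta> \<eta> + prec_r sc pc r \<zeta> \<eta>) \<xi>) v - pairing (succ_r sc pc r \<zeta> (succ_r sc pc r \<eta> \<xi>) - succ_r sc pc r \<eta> (succ_r sc pc r \<zeta> \<xi>)) v = 0"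
      by (rule lc0[OF F]) (simp only: EXPB, algebra)
  qed
  then show "pairing (succ_r sc pc r (succ_r sc pc r \<zeta> \<eta> + prec_r sc pc r \<zeta> \<eta>) \<xi>) v = pairing (succ_r sc pc r \<zeta> (succ_r sc pc r \<eta> \<xi>) - succ_r sc pc r \<eta> (succ_r sc pc r \<zeta> \<xi>)) v" by (simp only: right_minus_eq)
qed

lemma dualLD2: "prec_r sc pc r \<eta> (succ_r sc pc r \<zeta> \<xi> + prec_r sc pc r \<zeta> \<xi>) + prec_r sc pc r (succ_r sc pc r \<zeta> \<eta>) \<xi> = succ_r sc pc r \<zeta> (prec_r sc pc r \<eta> \<xi>)"
proof (rule covec_eq_pair)
  fix v
  have "pairing (prec_r sc pc r \<eta> (succ_r sc pc r \<zeta> \<xi> + prec_r sc pc r \<zeta> \<xi>) + prec_r sc pc r (succ_r sc pc r \<zeta> \<eta>) \<xi>) v - pairing (succ_r sc pc r \<zeta> (prec_r sc pc r \<eta> \<xi>)) v = 0"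
  proof -
    note f0 = LD1p[where g="\<xi>" and x="SS \<eta>" and y="SS \<zeta>" and z="v"]
    note f1 = LD1p[where g="\<zeta>" and x="SS \<eta>" and y="v" and z="SS \<xi>"]
    note f2 = LD1p[where g="\<xi>" and x="SS \<eta>" and y="v" and z="SS \<zeta>"]
    note f3 = LD1p[where g="\<zeta>" and x="SS \<xi>" and y="SS \<eta>" and z="v"]
    note f4 = LD1p[where g="\<xi>" and x="SS \<zeta>" and y="v" and z="Tr r \<eta>"]
    note f5 = LD1p[where g="\<zeta>" and x="Tr r \<eta>" and y="v" and z="SS \<xi>"]
    note f6 = LD1p[where g="\<xi>" and x="Tr r \<eta>" and y="v" and z="SS \<zeta>"]
    note f7 = LD1p[where g="\<zeta>" and x="Tr r \<xi>" and y="v" and z="SS \<eta>"]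
    note f8 = LD1p[where g="\<zeta>" and x="Tr r \<xi>" and y="v" and z="Tr r \<eta>"]
    note f9 = LD1p[where g="\<eta>" and x="Tr r \<zeta>" and y="Tr r \<xi>" and z="v"]
    note f10 = LD1p[where g="\<eta>" and x="Tr r \<zeta>" and y="v" and z="Tr r \<xi>"]
    note f11 = LD1p[where g="\<zeta>" and x="v" and y="SS \<eta>" and z="SS \<xi>"]
    note f12 = LD1p[where g="\<xi>" and x="v" and y="SS \<eta>" and z="SS \<zeta>"]
    note f13 = LD1p[where g="\<xi>" and x="v" and y="SS \<zeta>" and z="Tr r \<eta>"]
    note f14 = LD1p[where g="\<zeta>" and x="v" and y="Tr r \<xi>" and z="SS \<eta>"]
    note f15 = LD1p[where g="\<zeta>" and x="v" and y="Tr r \<xi>" and z="Tr r \<eta>"]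
    note f16 = LD2p[where g="\<zeta>" and x="SS \<xi>" and y="Tr r \<eta>" and z="v"]
    note f17 = LD2p[where g="\<xi>" and x="SS \<zeta>" and y="SS \<eta>" and z="v"]
    note f18 = LD2p[where g="\<xi>" and x="SS \<zeta>" and y="Tr r \<eta>" and z="v"]
    note f19 = LD2p[where g="\<xi>" and x="SS \<zeta>" and y="v" and z="SS \<eta>"]
    note f20 = LD2p[where g="\<zeta>" and x="Tr r \<eta>" and y="v" and z="SS \<xi>"]
    note f21 = LD2p[where g="\<xi>" and x="Tr r \<zeta>" and y="SS \<eta>" and z="v"]
    note f22 = LD2p[where g="\<xi>" and x="Tr r \<zeta>" and y="Tr r \<eta>" and z="v"]
    note f23 = LD2p[where g="\<eta>" and x="Tr r \<zeta>" and y="Tr r \<xi>" and z="v"]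
    note f24 = LD2p[where g="\<eta>" and x="Tr r \<zeta>" and y="v" and z="Tr r \<xi>"]
    note f25 = LD2p[where g="\<xi>" and x="v" and y="SS \<eta>" and z="SS \<zeta>"]
    note f26 = LD3p[where g="\<zeta>" and x="SS \<eta>" and y="SS \<xi>" and z="v"]
    note f27 = LD3p[where g="\<xi>" and x="SS \<eta>" and y="SS \<zeta>" and z="v"]
    note f28 = LD3p[where g="\<zeta>" and x="SS \<eta>" and y="Tr r \<xi>" and z="v"]
    note f29 = LD3p[where g="\<zeta>" and x="SS \<eta>" and y="v" and z="Tr r \<xi>"]
    note f30 = LD3p[where g="\<zeta>" and x="Tr r \<eta>" and y="SS \<xi>" and z="v"]
    note f31 = LD3p[where g="\<zeta>" and x="Tr r \<eta>" and y="Tr r \<xi>" and z="v"]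
    note f32 = LD3p[where g="\<xi>" and x="Tr r \<eta>" and y="v" and z="SS \<zeta>"]
    note f33 = LD3p[where g="\<zeta>" and x="Tr r \<eta>" and y="v" and z="Tr r \<xi>"]
    note f34 = LD3p[where g="\<eta>" and x="Tr r \<zeta>" and y="Tr r \<xi>" and z="v"]
    note f35 = LD3p[where g="\<eta>" and x="Tr r \<zeta>" and y="v" and z="Tr r \<xi>"]
    note f36 = LD3p[where g="\<xi>" and x="v" and y="SS \<eta>" and z="SS \<zeta>"]
    note f37 = LD3p[where g="\<xi>" and x="v" and y="SS \<zeta>" and z="SS \<eta>"]
    note f38 = TR2[of "\<eta>" Rp "v" Ls "SS \<xi>" "\<zeta>"]
    note f39 = TR2[of "\<eta>" Rp "v" Rs "SS \<zeta>" "\<xi>"]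
    note f40 = TR2[of "\<eta>" Lp "SS \<xi>" Rs "v" "\<zeta>"]
    note f41 = TR1[of "\<eta>" Rp "sc (SS \<zeta>) (v)" "\<xi>"]
    note f42 = TR2[of "\<eta>" Lp "v" Lp "SS \<xi>" "\<zeta>"]
    note f43 = TR2[of "\<eta>" Lp "v" Rp "SS \<zeta>" "\<xi>"]
    note f44 = TR2[of "\<eta>" Rs "v" Ls "SS \<zeta>" "\<xi>"]
    note f45 = TR2[of "\<eta>" Rs "v" Rs "SS \<xi>" "\<zeta>"]
    note f46 = TR2[of "\<eta>" Ls "SS \<xi>" Lp "v" "\<zeta>"]
    note f47 = TR1[of "\<eta>" Rs "pc (v) (SS \<zeta>)" "\<xi>"]
    note f48 = TR2[of "\<eta>" Ls "SS \<xi>" Ls "v" "\<zeta>"]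
    note f49 = TR1[of "\<eta>" Rs "sc (v) (SS \<zeta>)" "\<xi>"]
    note f50 = TR2[of "\<eta>" Ls "v" Ls "SS \<xi>" "\<zeta>"]
    note f51 = TR2[of "\<eta>" Ls "v" Rs "SS \<zeta>" "\<xi>"]
    note f52 = TR1[of "\<xi>" Lp "sc (v) (SS \<eta>)" "\<zeta>"]
    note f53 = TR2[of "\<xi>" Rp "Tr r \<eta>" Ls "v" "\<zeta>"]
    note f54 = TR2[of "\<xi>" Lp "v" Rs "Tr r \<eta>" "\<zeta>"]
    note f55 = TR2[of "\<xi>" Rs "SS \<eta>" Lp "v" "\<zeta>"]
    note f56 = TR1[of "\<xi>" Ls "sc (Tr r \<eta>) (v)" "\<zeta>"]
    note f57 = TR1[of "\<xi>" Ls "sc (v) (SS \<eta>)" "\<zeta>"]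
    note f58 = TR2[of "\<xi>" Rs "SS \<eta>" Ls "v" "\<zeta>"]
    note f59 = TR2[of "\<xi>" Ls "v" Ls "Tr r \<eta>" "\<zeta>"]
    note f60 = TR2[of "\<zeta>" Rp "v" Rs "Tr r \<eta>" "\<xi>"]
    note f61 = TR2[of "\<zeta>" Lp "SS \<eta>" Rp "v" "\<xi>"]
    note f62 = TR2[of "\<zeta>" Lp "SS \<eta>" Rs "v" "\<xi>"]
    note f63 = TR1[of "\<zeta>" Rp "pc (Tr r \<eta>) (v)" "\<xi>"]
    note f64 = TR2[of "\<zeta>" Lp "Tr r \<eta>" Ls "v" "\<xi>"]
    note f65 = TR2[of "\<zeta>" Lp "v" Rp "SS \<eta>" "\<xi>"]
    note f66 = TR2[of "\<zeta>" Lp "v" Rp "Tr r \<eta>" "\<xi>"]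
    note f67 = TR2[of "\<zeta>" Lp "v" Rs "Tr r \<eta>" "\<xi>"]
    note f68 = TR2[of "\<zeta>" Rs "Tr r \<eta>" Lp "v" "\<xi>"]
    note f69 = TR2[of "\<zeta>" Rs "v" Rs "SS \<eta>" "\<xi>"]
    note f70 = TR2[of "\<zeta>" Ls "SS \<eta>" Rs "v" "\<xi>"]
    note f71 = TR2[of "\<zeta>" Ls "v" Rp "SS \<eta>" "\<xi>"]
    note f72 = TR2[of "\<zeta>" Ls "v" Rp "Tr r \<eta>" "\<xi>"]
    note f73 = TR2[of "\<zeta>" Ls "v" Rs "Tr r \<eta>" "\<xi>"]
    note F = cadd[OF cadd[OF cadd[OF cadd[OF cadd[OF cadd[OF cadd[OF cadd[OF csub[OF csub[OF cadd[OF cadd[OF cadd[OF cadd[OF csub[OF csub[OF cadd[OF csub[OF csub[OF csub[OF csub[OF cadd[OF cadd[OF csub[OF csub[OF cadd[OF csub[OF cadd[OF csub[OF cadd[OF csub[OF cadd[OF csub[OF cadd[OF cadd[OF csub[OF cadd[OF cadd[OF csub[OF csub[OF csub[OF csub[OF csub[OF cadd[OF cadd[OF cadd[OF csub[OF csub[OF csub[OF cadd[OF cadd[OF cadd[OF csub[OF cadd[OF csub[OF csub[OF cadd[OF csub[OF csub[OF cadd[OF csub[OF csub[OF csub[OF cadd[OF cadd[OF csub[OF cadd[OF cadd[OF cadd[OF csub[OF csub[OF csub[OF csub[OF f0 f1] f2] f3] f4] f5] f6] f7] f8] f9] f10] f11] f12] f13] f14] f15] f16] f17] f18] f19] f20]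 f21] f22] f23] f24] f25] f26] f27] f28] f29] f30] f31] f32] f33] f34] f35] f36] f37] f38] f39] f40] f41] f42] f43] f44] f45] f46] f47] f48] f49] f50] f51] f52] f53] f54] f55] f56] f57] f58] f59] f60] f61] f62] f63] f64] f65] f66] f67] f68] f69] f70] f71] f72] f73]
    show "pairing (prec_r sc pc r \<eta> (succ_r sc pc r \<zeta> \<xi> + prec_r sc pc r \<zeta> \<xi>) + prec_r sc pc r (succ_r sc pc r \<zeta> \<eta>) \<xi>) v - pairing (succ_r sc pc r \<zeta> (prec_r sc pc r \<eta> \<xi>)) v = 0"
      by (rule lc0[OF F]) (simp only: EXPB, algebra)
  qed
  then show "pairing (prec_r sc pc r \<eta> (succ_r sc pc r \<zeta> \<xi> + prec_r sc pc r \<zeta> \<xi>) + prec_r sc pc r (succ_r sc pc r \<zeta> \<eta>) \<xi>) v = pairing (succ_r sc pc r \<zeta> (prec_r sc pc r \<eta> \<xi>)) v" by (simp only: right_minus_eq)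
qed

lemma dualLD3: "prec_r sc pc r \<zeta> (succ_r sc pc r \<eta> \<xi> + prec_r sc pc r \<eta> \<xi>) = prec_r sc pc r (prec_r sc pc r \<zeta> \<eta>) \<xi> + succ_r sc pc r \<eta> (prec_r sc pc r \<zeta> \<xi>)"
proof (rule covec_eq_pair)
  fix v
  have "pairing (prec_r sc pc r \<zeta> (succ_r sc pc r \<eta> \<xi> + prec_r sc pc r \<eta> \<xi>)) v - pairing (prec_r sc pc r (prec_r sc pc r \<zeta> \<eta>) \<xi> + succ_r sc pc r \<eta> (prec_r sc pc r \<zeta> \<xi>)) v = 0"
  proof -
    note f0 = LD1p[where g="\<xi>" and x="SS \<eta>" and y="SS \<zeta>" and z="v"]
    note f1 = LD1p[where g="\<eta>" and x="SS \<xi>" and y="v" and z="Tr r \<zeta>"]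
    note f2 = LD1p[where g="\<eta>" and x="SS \<zeta>" and y="v" and z="SS \<xi>"]
    note f3 = LD1p[where g="\<zeta>" and x="Tr r \<eta>" and y="Tr r \<xi>" and z="v"]
    note f4 = LD1p[where g="\<zeta>" and x="Tr r \<eta>" and y="v" and z="Tr r \<xi>"]
    note f5 = LD1p[where g="\<zeta>" and x="Tr r \<xi>" and y="v" and z="Tr r \<eta>"]
    note f6 = LD1p[where g="\<eta>" and x="v" and y="SS \<xi>" and z="SS \<zeta>"]
    note f7 = LD1p[where g="\<eta>" and x="v" and y="SS \<xi>" and z="Tr r \<zeta>"]
    note f8 = LD1p[where g="\<eta>" and x="v" and y="SS \<zeta>" and z="SS \<xi>"]
    note f9 = LD1p[where g="\<zeta>" and x="v" and y="Tr r \<xi>" and z="Tr r \<eta>"]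
    note f10 = LD2p[where g="\<xi>" and x="SS \<eta>" and y="SS \<zeta>" and z="v"]
    note f11 = LD2p[where g="\<xi>" and x="SS \<eta>" and y="Tr r \<zeta>" and z="v"]
    note f12 = LD2p[where g="\<xi>" and x="SS \<eta>" and y="v" and z="SS \<zeta>"]
    note f13 = LD2p[where g="\<eta>" and x="SS \<xi>" and y="SS \<zeta>" and z="v"]
    note f14 = LD2p[where g="\<xi>" and x="SS \<zeta>" and y="v" and z="SS \<eta>"]
    note f15 = LD2p[where g="\<eta>" and x="SS \<zeta>" and y="v" and z="SS \<xi>"]
    note f16 = LD2p[where g="\<zeta>" and x="Tr r \<eta>" and y="Tr r \<xi>" and z="v"]
    note f17 = LD2p[where g="\<zeta>" and x="Tr r \<eta>" and y="v" and z="Tr r \<xi>"]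
    note f18 = LD2p[where g="\<zeta>" and x="Tr r \<xi>" and y="v" and z="Tr r \<eta>"]
    note f19 = LD2p[where g="\<eta>" and x="v" and y="SS \<zeta>" and z="SS \<xi>"]
    note f20 = LD2p[where g="\<zeta>" and x="v" and y="Tr r \<xi>" and z="Tr r \<eta>"]
    note f21 = LD3p[where g="\<xi>" and x="SS \<eta>" and y="SS \<zeta>" and z="v"]
    note f22 = LD3p[where g="\<xi>" and x="SS \<eta>" and y="v" and z="SS \<zeta>"]
    note f23 = LD3p[where g="\<eta>" and x="SS \<xi>" and y="SS \<zeta>" and z="v"]
    note f24 = LD3p[where g="\<eta>" and x="SS \<xi>" and y="v" and z="SS \<zeta>"]
    note f25 = LD3p[where g="\<xi>" and x="SS \<zeta>" and y="SS \<eta>" and z="v"]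
    note f26 = LD3p[where g="\<eta>" and x="SS \<zeta>" and y="SS \<xi>" and z="v"]
    note f27 = LD3p[where g="\<xi>" and x="SS \<zeta>" and y="Tr r \<eta>" and z="v"]
    note f28 = LD3p[where g="\<eta>" and x="SS \<zeta>" and y="Tr r \<xi>" and z="v"]
    note f29 = LD3p[where g="\<eta>" and x="SS \<zeta>" and y="v" and z="Tr r \<xi>"]
    note f30 = LD3p[where g="\<zeta>" and x="Tr r \<eta>" and y="Tr r \<xi>" and z="v"]
    note f31 = LD3p[where g="\<zeta>" and x="Tr r \<eta>" and y="v" and z="Tr r \<xi>"]
    note f32 = LD3p[where g="\<zeta>" and x="Tr r \<xi>" and y="v" and z="Tr r \<eta>"]
    note f33 = LD3p[where g="\<xi>" and x="Tr r \<zeta>" and y="SS \<eta>" and z="v"]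
    note f34 = LD3p[where g="\<eta>" and x="Tr r \<zeta>" and y="SS \<xi>" and z="v"]
    note f35 = LD3p[where g="\<xi>" and x="Tr r \<zeta>" and y="Tr r \<eta>" and z="v"]
    note f36 = LD3p[where g="\<eta>" and x="Tr r \<zeta>" and y="Tr r \<xi>" and z="v"]
    note f37 = LD3p[where g="\<eta>" and x="Tr r \<zeta>" and y="v" and z="SS \<xi>"]
    note f38 = LD3p[where g="\<eta>" and x="Tr r \<zeta>" and y="v" and z="Tr r \<xi>"]
    note f39 = LD3p[where g="\<xi>" and x="v" and y="SS \<zeta>" and z="SS \<eta>"]
    note f40 = LD3p[where g="\<eta>" and x="v" and y="SS \<zeta>" and z="SS \<xi>"]
    note f41 = LD3p[where g="\<zeta>" and x="v" and y="Tr r \<xi>" and z="Tr r \<eta>"]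
    note f42 = TR2[of "\<eta>" Rp "v" Rp "SS \<zeta>" "\<xi>"]
    note f43 = TR2[of "\<eta>" Rp "v" Rs "SS \<zeta>" "\<xi>"]
    note f44 = TR1[of "\<eta>" Rp "sc (SS \<zeta>) (v)" "\<xi>"]
    note f45 = TR1[of "\<eta>" Rs "sc (v) (SS \<zeta>)" "\<xi>"]
    note f46 = TR2[of "\<eta>" Ls "v" Rp "SS \<zeta>" "\<xi>"]
    note f47 = TR2[of "\<eta>" Ls "v" Rs "SS \<zeta>" "\<xi>"]
    note f48 = TR2[of "\<xi>" Rp "v" Rs "SS \<zeta>" "\<eta>"]
    note f49 = TR2[of "\<xi>" Rp "v" Rs "Tr r \<zeta>" "\<eta>"]
    note f50 = TR1[of "\<xi>" Rp "pc (Tr r \<zeta>) (v)" "\<eta>"]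
    note f51 = TR1[of "\<xi>" Ls "pc (v) (SS \<zeta>)" "\<eta>"]
    note f52 = TR1[of "\<xi>" Ls "sc (SS \<zeta>) (v)" "\<eta>"]
    note f53 = TR1[of "\<xi>" Ls "sc (v) (SS \<zeta>)" "\<eta>"]
    note f54 = TR2[of "\<zeta>" Lp "SS \<eta>" Rp "v" "\<xi>"]
    note f55 = TR1[of "\<zeta>" Rp "pc (SS \<xi>) (v)" "\<eta>"]
    note f56 = TR2[of "\<zeta>" Lp "SS \<eta>" Rs "v" "\<xi>"]
    note f57 = TR1[of "\<zeta>" Rp "sc (SS \<xi>) (v)" "\<eta>"]
    note f58 = TR2[of "\<zeta>" Ls "SS \<eta>" Rs "v" "\<xi>"]
    note f59 = TR1[of "\<zeta>" Rs "sc (SS \<xi>) (v)" "\<eta>"]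
    note f60 = TR2[of "\<zeta>" Ls "v" Lp "SS \<xi>" "\<eta>"]
    note f61 = TR2[of "\<zeta>" Ls "v" Rp "SS \<eta>" "\<xi>"]
    note F = csub[OF cadd[OF cadd[OF csub[OF cadd[OF csub[OF cadd[OF csub[OF cadd[OF cadd[OF cadd[OF csub[OF csub[OF cadd[OF csub[OF csub[OF cadd[OF cadd[OF csub[OF csub[OF cadd[OF cadd[OF csub[OF csub[OF cadd[OF csub[OF cadd[OF cadd[OF csub[OF cadd[OF csub[OF csub[OF cadd[OF cadd[OF csub[OF csub[OF cadd[OF csub[OF csub[OF cadd[OF cadd[OF csub[OF csub[OF csub[OF cadd[OF cadd[OF csub[OF cadd[OF cadd[OF csub[OF cadd[OF csub[OF csub[OF csub[OF cadd[OF csub[OF csub[OF cadd[OF cadd[OF csub[OF cadd[OF cneg[OF f0] f1] f2] f3] f4] f5] f6] f7] f8] f9] f10] f11] f12] f13] f14] f15] f16] f17] f18] f19] f20] f21] f22] f23] f24] f25] f26] f27] f28] f29] f30] f31] f32] f33] f34] f35] f36] f37] f38] f39] f40] f41] f42] f43] f44] f45] f46] f47] f48] f49] f50] f51] f52] f53] f54] f55] f56] f57] f58] f59] f60] f61]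
    show "pairing (prec_r sc pc r \<zeta> (succ_r sc pc r \<eta> \<xi> + prec_r sc pc r \<eta> \<xi>)) v - pairing (prec_r sc pc r (prec_r sc pc r \<zeta> \<eta>) \<xi> + succ_r sc pc r \<eta> (prec_r sc pc r \<zeta> \<xi>)) v = 0"
      by (rule lc0[OF F]) (simp only: EXPB, algebra)
  qed
  then show "pairing (prec_r sc pc r \<zeta> (succ_r sc pc r \<eta> \<xi> + prec_r sc pc r \<eta> \<xi>)) v = pairing (prec_r sc pc r (prec_r sc pc r \<zeta> \<eta>) \<xi> + succ_r sc pc r \<eta> (prec_r sc pc r \<zeta> \<xi>)) v" by (simp only: right_minus_eq)
qed

end

end

lemmas EXPG = bil_add_L bil_add_R bil_diff_L bil_diff_R bil_uminus_L bil_uminus_R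
  pairing_add_L pairing_add_R pairing_diff_L pairing_diff_R pairing_uminus_L pairing_uminus_R
  Tr_add Tr_diff Tr_uminus opsum_eq

lemma succ_add2: "succ_r (bil cs) (bil cp) r z (a + b) = succ_r (bil cs) (bil cp) r z a + succ_r (bil cs) (bil cp) r z b"
  by (rule covec_eq_pair) (simp only: succ_pair EXPG, algebra)
lemma prec_add1: "prec_r (bil cs) (bil cp) r (a + b) z = prec_r (bil cs) (bil cp) r a z + prec_r (bil cs) (bil cp) r b z"
  by (rule covec_eq_pair) (simp only: prec_pair EXPG, algebra)

lemma leib_from_ld:
  fixes f g :: "('i \<Rightarrow> 'a::field) \<Rightarrow> ('i \<Rightarrow> 'a) \<Rightarrow> ('i \<Rightarrow> 'a)"
  assumes ld: "leib_dend f g"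
    and fadd: "\<And>x y z. f x (y + z) = f x y + f x z"
    and gadd: "\<And>x y z. g (x + y) z = g x z + g y z"
  shows "leibniz (opsum f g)"
  unfolding leibniz_def
proof (intro allI)
  fix x y z
  have A1: "f (opsum f g x y) z = (\<lambda>k. f x (f y z) k - f y (f x z) k)"
    using ld unfolding leib_dend_def by blast
  have A2: "(\<lambda>k. g y (opsum f g x z) k + g (f x y) z k) = f x (g y z)"
    using ld unfolding leib_dend_def by blast
  have A3: "g x (opsum f g y z) = (\<lambda>k. g (g x y) z k + f y (g x z) k)"
    using ld unfolding leib_dend_def by blast
  have L1: "f (opsum f g x y) z = f x (f y z) - f y (f x z)"
    using A1 by (simp only: fun_diff_def)
  have L2: "g y (opsum f g x z) + g (f x y) z = f x (g y z)"
    using A2 by (simp only: plus_fun_def)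
  have L3: "g x (opsum f g y z) = g (g x y) z + f y (g x z)"
    using A3 by (simp only: plus_fun_def)
  have L2': "g y (opsum f g x z) = f x (g y z) - g (f x y) z"
    using L2 by (simp add: eq_diff_eq)
  have E1: "opsum f g x (opsum f g y z) = f x (f y z) + f x (g y z) + g x (opsum f g y z)"
    by (simp only: opsum_eq fadd)
  have E2: "opsum f g (opsum f g x y) z = f (opsum f g x y) z + g (f x y) z + g (g x y) z"
    by (simp only: opsum_eq gadd add.assoc)
  have E3: "opsum f g y (opsum f g x z) = f y (f x z) + f y (g x z) + g y (opsum f g x z)"
    by (simp only: opsum_eq fadd)
  have "opsum f g x (opsum f g y z) = opsum f g (opsum f g x y) z + opsum f g y (opsum f g x z)"
    unfolding E1 E2 E3 L1 L2' L3 by (simp add: algebra_simps)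
  then show "opsum f g x (opsum f g y z) = (\<lambda>k. opsum f g (opsum f g x y) z k + opsum f g y (opsum f g x z) k)"
    by (simp only: plus_fun_def)
qed

theorem mainTheorem8:
  fixes cs cp :: "'i::finite \<Rightarrow> 'i \<Rightarrow> 'i \<Rightarrow> 'a::field"
    and r :: "'i \<Rightarrow> 'i \<Rightarrow> 'a"
  defines "sc \<equiv> bil cs" and "pc \<equiv> bil cp"
  assumes LD: "leib_dend sc pc"
    and inv: "invariant sc pc (\<lambda>p q. r p q + tau r p q)"
  shows "(S_tensor sc pc r = (\<lambda>_ _ _. 0)
          \<longleftrightarrow> (leibniz (opsum (succ_r sc pc r) (prec_r sc pc r)) \<and>
               (\<forall>\<zeta> \<eta>. Tr r (opsum (succ_r sc pc r) (prec_r sc pc r) \<zeta> \<eta>)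
                        = opsum sc pc (Tr r \<zeta>) (Tr r \<eta>)) \<and>
               (\<forall>\<zeta> \<eta>. - Tr (tau r) (opsum (succ_r sc pc r) (prec_r sc pc r) \<zeta> \<eta>)
                        = opsum sc pc (- Tr (tau r) \<zeta>) (- Tr (tau r) \<eta>))))
       \<and> (S_tensor sc pc r = (\<lambda>_ _ _. 0)
          \<longleftrightarrow> (leib_dend (succ_r sc pc r) (prec_r sc pc r) \<and>
               (\<forall>\<zeta> \<eta>. Tr r (succ_r sc pc r \<zeta> \<eta>) = sc (Tr r \<zeta>) (Tr r \<eta>)) \<and>
               (\<forall>\<zeta> \<eta>. Tr r (prec_r sc pc r \<zeta> \<eta>) = pc (Tr r \<zeta>) (Tr r \<eta>)) \<and>
               (\<forall>\<zeta> \<eta>. - Tr (tau r) (succ_r sc pc r \<zeta> \<eta>) = sc (- Tr (tau r) \<zeta>) (- Tr (tau r) \<eta>)) \<and>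
               (\<forall>\<zeta> \<eta>. - Tr (tau r) (prec_r sc pc r \<zeta> \<eta>) = pc (- Tr (tau r) \<zeta>) (- Tr (tau r) \<eta>))))"
proof -
  interpret L: LDc cs cp r
    using LD inv unfolding sc_def pc_def by unfold_locales
  let ?S = "succ_r (bil cs) (bil cp) r"
  let ?P = "prec_r (bil cs) (bil cp) r"
  have fwd: "(\<forall>\<zeta> \<eta>. Tr r (?S \<zeta> \<eta>) = bil cs (Tr r \<zeta>) (Tr r \<eta>)) \<and>
        (\<forall>\<zeta> \<eta>. Tr r (?P \<zeta> \<eta>) = bil cp (Tr r \<zeta>) (Tr r \<eta>)) \<and>
        (\<forall>\<zeta> \<eta>. - Tr (tau r) (?S \<zeta> \<eta>) = bil cs (- Tr (tau r) \<zeta>) (- Tr (tau r) \<eta>)) \<and>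
        (\<forall>\<zeta> \<eta>. - Tr (tau r) (?P \<zeta> \<eta>) = bil cp (- Tr (tau r) \<zeta>) (- Tr (tau r) \<eta>)) \<and>
        leib_dend ?S ?P"
    if Sz: "S_tensor (bil cs) (bil cp) r = (\<lambda>_ _ _. 0)"
  proof -
    have Sf: "\<And>a b c. Sform cs cp r a b c = 0" using S_zero_Sform[OF Sz] .
    have ld: "leib_dend ?S ?P"
      unfolding leib_dend_def
    proof (intro conjI allI)
      fix x y z
      show "?S (opsum ?S ?P x y) z = (\<lambda>k. ?S x (?S y z) k - ?S y (?S x z) k)"
        using L.dualLD1[OF Sf, where \<zeta>=x and \<eta>=y and \<xi>=z] by (simp only: opsum_eq fun_diff_def)
      show "(\<lambda>k. ?P y (opsum ?S ?P x z) k + ?P (?S x y) z k) = ?S x (?P y z)"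
        using L.dualLD2[OF Sf, where \<zeta>=x and \<eta>=y and \<xi>=z] by (simp only: opsum_eq plus_fun_def)
      show "?P x (opsum ?S ?P y z) = (\<lambda>k. ?P (?P x y) z k + ?S y (?P x z) k)"
        using L.dualLD3[OF Sf, where \<zeta>=x and \<eta>=y and \<xi>=z] by (simp only: opsum_eq plus_fun_def)
    qed
    show ?thesis
      using ld L.homT_succ[OF Sf] L.homT_prec[OF Sf] L.homU_succ[OF Sf] L.homU_prec[OF Sf]
      by (simp add: bil_uminus_L bil_uminus_R)
  qed
  have bwd: "S_tensor (bil cs) (bil cp) r = (\<lambda>_ _ _. 0)"
    if h: "\<And>\<zeta> \<eta>. Tr r (opsum ?S ?P \<zeta> \<eta>) = opsum (bil cs) (bil cp) (Tr r \<zeta>) (Tr r \<eta>)"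
    by (rule Sform_zero_S) (rule L.S_from_hom[OF h])
  have leib: "leib_dend ?S ?P \<Longrightarrow> leibniz (opsum ?S ?P)"
    by (rule leib_from_ld) (simp_all only: succ_add2 prec_add1)
  show ?thesis
    unfolding sc_def pc_def
  proof (rule conjI; rule iffI)
    assume Sz: "S_tensor (bil cs) (bil cp) r = (\<lambda>_ _ _. 0)"
    note F = fwd[OF Sz]
    show "leibniz (opsum ?S ?P) \<and> (\<forall>\<zeta> \<eta>. Tr r (opsum ?S ?P \<zeta> \<eta>) = opsum (bil cs) (bil cp) (Tr r \<zeta>) (Tr r \<eta>)) \<and>
        (\<forall>\<zeta> \<eta>. - Tr (tau r) (opsum ?S ?P \<zeta> \<eta>) = opsum (bil cs) (bil cp) (- Tr (tau r) \<zeta>) (- Tr (tau r) \<eta>))"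
      using F leib by (simp add: opsum_eq Tr_add)
  next
    assume "leibniz (opsum ?S ?P) \<and> (\<forall>\<zeta> \<eta>. Tr r (opsum ?S ?P \<zeta> \<eta>) = opsum (bil cs) (bil cp) (Tr r \<zeta>) (Tr r \<eta>)) \<and>
        (\<forall>\<zeta> \<eta>. - Tr (tau r) (opsum ?S ?P \<zeta> \<eta>) = opsum (bil cs) (bil cp) (- Tr (tau r) \<zeta>) (- Tr (tau r) \<eta>))"
    then show "S_tensor (bil cs) (bil cp) r = (\<lambda>_ _ _. 0)" using bwd by blast
  next
    assume Sz: "S_tensor (bil cs) (bil cp) r = (\<lambda>_ _ _. 0)"
    show "leib_dend ?S ?P \<and> (\<forall>\<zeta> \<eta>. Tr r (?S \<zeta> \<eta>) = bil cs (Tr r \<zeta>) (Tr r \<eta>)) \<and>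
        (\<forall>\<zeta> \<eta>. Tr r (?P \<zeta> \<eta>) = bil cp (Tr r \<zeta>) (Tr r \<eta>)) \<and>
        (\<forall>\<zeta> \<eta>. - Tr (tau r) (?S \<zeta> \<eta>) = bil cs (- Tr (tau r) \<zeta>) (- Tr (tau r) \<eta>)) \<and>
        (\<forall>\<zeta> \<eta>. - Tr (tau r) (?P \<zeta> \<eta>) = bil cp (- Tr (tau r) \<zeta>) (- Tr (tau r) \<eta>))"
      using fwd[OF Sz] by blast
  next
    assume h: "leib_dend ?S ?P \<and> (\<forall>\<zeta> \<eta>. Tr r (?S \<zeta> \<eta>) = bil cs (Tr r \<zeta>) (Tr r \<eta>)) \<and>
        (\<forall>\<zeta> \<eta>. Tr r (?P \<zeta> \<eta>) = bil cp (Tr r \<zeta>) (Tr r \<eta>)) \<and>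
        (\<forall>\<zeta> \<eta>. - Tr (tau r) (?S \<zeta> \<eta>) = bil cs (- Tr (tau r) \<zeta>) (- Tr (tau r) \<eta>)) \<and>
        (\<forall>\<zeta> \<eta>. - Tr (tau r) (?P \<zeta> \<eta>) = bil cp (- Tr (tau r) \<zeta>) (- Tr (tau r) \<eta>))"
    show "S_tensor (bil cs) (bil cp) r = (\<lambda>_ _ _. 0)"
    proof (rule bwd)
      fix \<zeta> \<eta>
      show "Tr r (opsum ?S ?P \<zeta> \<eta>) = opsum (bil cs) (bil cp) (Tr r \<zeta>) (Tr r \<eta>)"
        using h by (simp add: opsum_eq Tr_add)
    qed
  qed
qed


end
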